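(* Let $K>1$, $\mathcal{Y}=\{1,\dots,K\}$, $(X,Y,M)$ distributed on $\mathcal{X}\times\mathcal{Y}\times\mathcal{Y}$, and let $\bm{g}:\mathcal{X}\to\mathbb{R}^{K+1}$ be measurable with classifier part $\bm{g}_{\rm class}=(g_1,\dots,g_K)$. Then $$\max\Big(R_{01}(\bm{g}_{\rm class})-R_{01}^*,\ R^{\bot}_{01}(\bm{g})-R^{\bot*}_{01}\Big)\le\sqrt{2\big(R_{L_{\tilde{\psi}}}(\bm{g})-R^*_{L_{\tilde{\psi}}}\big)}.$$
   Context: Asymmetric softmax: $\tilde{\psi}_y(\bm{u})=\exp(u_y)/\sum_{y'=1}^K\exp(u_{y'})$ for $y\le K$, $\tilde{\psi}_{K+1}(\bm{u})=\exp(u_{K+1})/(\sum_{y'=1}^{K+1}\exp(u_{y'})-\max_{y'\le K}\exp(u_{y'}))$. Surrogate $L_{\tilde{\psi}}(\bm{u},y,m)=-\log\tilde{\psi}_y(\bm{u})-[\![m\ne y]\!]\log(1-\tilde{\psi}_{K+1}(\bm{u}))-[\![m=y]\!]\log\tilde{\psi}_{K+1}(\bm{u})$, $R_{L_{\tilde{\psi}}}(\bm{g})=\mathbb{E}[L_{\tilde{\psi}}(\bm{g}(X),Y,M)]$ and $R^*_{L_{\tilde{\psi}}}$ its infimum over measurable $\bm{g}$. $R_{01}(\bm{g}_{\rm class})=\Pr(\mathop{\rm argmax}_{y\le K}g_y(X)\ne Y)$ and $R^*_{01}$ is the Bayes (minimal) misclassification error. The 0-1-deferral loss is $\ell^{\bot}_{01}(f(\bm{x}),y,m)=[\![f(\bm{x})\in\mathcal{Y},\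 f(\bm{x})\ne y]\!]+[\![f(\bm{x})=\bot,\ m\ne y]\!]$; $R^{\bot}_{01}(\bm{g})=\mathbb{E}[\ell^{\bot}_{01}(\varphi(\bm{g}(X)),Y,M)]$ where $\varphi(\bm{u})=\bot$ if $u_{K+1}>\max_{y\le K}u_y$ and $\varphi(\bm{u})=\mathop{\rm argmax}_{y\le K}u_y$ otherwise; $R^{\bot*}_{01}$ is the infimum of the 0-1-deferral risk over all $f:\mathcal{X}\to\mathcal{Y}\cup\{\bot\}$. *)

theory Defs
  imports "HOL-Probability.Probability"
begin

text \<open>Labels are 1..K; a score vector u :: nat => real uses indices 1..K+1.
  Deferral (bottom) is encoded as None in the type nat option.\<close>

definition psi_t :: "nat \<Rightarrow> (nat \<Rightarrow> real) \<Rightarrow> nat \<Rightarrow> real" where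
  "psi_t K u y =
     (if y = K + 1 then
        exp (u (K+1)) / ((\<Sum>y'=1..K+1. exp (u y')) - Max ((\<lambda>y'. exp (u y')) ` {1..K}))
      else exp (u y) / (\<Sum>y'=1..K. exp (u y')))"

definition L_psi :: "nat \<Rightarrow> (nat \<Rightarrow> real) \<Rightarrow> nat \<Rightarrow> nat \<Rightarrow> real" where
  "L_psi K u y m =
     - ln (psi_t K u y)
     - (if m \<noteq> y then ln (1 - psi_t K u (K+1)) else 0)
     - (if m = y then ln (psi_t K u (K+1)) else 0)"

definition argmaxK :: "nat \<Rightarrow> (nat \<Rightarrow> real) \<Rightarrow> nat" where
  "argmaxK K u = (LEAST y. y \<in> {1..K} \<and> (\<forall>y'\<in>{1..K}. u y' \<le> u y))"

definition phi :: "nat \<Rightarrow> (nat \<Rightarrow> real) \<Rightarrow> nat option" where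
  "phi K u = (if u (K+1) > Max (u ` {1..K}) then None else Some (argmaxK K u))"

definition loss01_defer :: "nat option \<Rightarrow> nat \<Rightarrow> nat \<Rightarrow> real" where
  "loss01_defer f y m =
     (case f of Some c \<Rightarrow> (if c \<noteq> y then 1 else 0)
              | None \<Rightarrow> (if m \<noteq> y then 1 else 0))"

definition meas_scores :: "'a measure \<Rightarrow> nat \<Rightarrow> ('a \<Rightarrow> nat \<Rightarrow> real) set" where
  "meas_scores Xs K = {g. \<forall>j\<in>{1..K+1}. (\<lambda>x. g x j) \<in> borel_measurable Xs}"

definition risk_L :: "('a \<times> nat \<times> nat) measure \<Rightarrow> nat \<Rightarrow> ('a \<Rightarrow> nat \<Rightarrow> real) \<Rightarrow> ennreal" where
  "risk_L D K g = (\<integral>\<^sup>+ (x, y, m). ennreal (L_psi K (g x) y m) \<partial>D)"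

definition risk_L_star :: "'a measure \<Rightarrow> ('a \<times> nat \<times> nat) measure \<Rightarrow> nat \<Rightarrow> ennreal" where
  "risk_L_star Xs D K = (INF g \<in> meas_scores Xs K. risk_L D K g)"

definition risk01 :: "('a \<times> nat \<times> nat) measure \<Rightarrow> ('a \<Rightarrow> nat) \<Rightarrow> real" where
  "risk01 D h = measure D {(x, y, m) \<in> space D. h x \<noteq> y}"

definition risk01_star :: "'a measure \<Rightarrow> ('a \<times> nat \<times> nat) measure \<Rightarrow> nat \<Rightarrow> real" where
  "risk01_star Xs D K = (INF h \<in> Xs \<rightarrow>\<^sub>M count_space {1..K}. risk01 D h)"

definition risk_defer :: "('a \<times> nat \<times> nat) measure \<Rightarrow> ('a \<Rightarrow> nat option) \<Rightarrow> real" where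
  "risk_defer D f = (\<integral> (x, y, m). loss01_defer (f x) y m \<partial>D)"

definition risk_defer_star :: "'a measure \<Rightarrow> ('a \<times> nat \<times> nat) measure \<Rightarrow> nat \<Rightarrow> real" where
  "risk_defer_star Xs D K =
     (INF f \<in> Xs \<rightarrow>\<^sub>M count_space (insert None (Some ` {1..K})). risk_defer D f)"

end

theory Submission
  imports Defs
begin

definition bkl :: "real \<Rightarrow> real \<Rightarrow> real" where
  "bkl p q = p * (ln p - ln q) + (1 - p) * (ln (1 - p) - ln (1 - q))"

lemma pinsker_bin_aux:
  fixes p q :: real
  assumes p: "0 \<le> p" "p \<le> q" and q: "q < 1"
  shows "2 * (p - q)^2 \<le> bkl p q"
proof -
  define F where "F t = p * (ln p - ln t) + (1 - p) * (ln (1 - p) - ln (1 - t)) - 2 * (p - t)^2" for t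
  have "F p \<le> F q"
  proof (rule DERIV_nonneg_imp_increasing_open[OF p(2)])
    fix t assume t: "p < t" "t < q"
    hence t0: "0 < t" "t < 1" using p q by auto
    have "(F has_real_derivative (-p/t + (1-p)/(1-t) + 4*(p-t))) (at t)"
      unfolding F_def using t0
      by (auto intro!: derivative_eq_intros)
    moreover have "-p/t + (1-p)/(1-t) + 4*(p-t) = (t-p)*(1-2*t)^2/(t*(1-t))"
    proof -
      have d: "t*(1-t) > 0" using t0 by auto
      have "(-p/t + (1-p)/(1-t) + 4*(p-t)) * (t*(1-t)) = -p*(1-t) + (1-p)*t + 4*(p-t)*(t*(1-t))"
      proof -
        have a: "(-p/t) * (t*(1-t)) = -p*(1-t)" using t0 by simp
        have b: "((1-p)/(1-t)) * (t*(1-t)) = (1-p)*t" using t0 by simp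
        show ?thesis unfolding distrib_right a b by simp
      qed
      also have "\<dots> = (t-p)*(1-2*t)^2" by (simp add: algebra_simps power2_eq_square)
      finally show ?thesis using d t0 by (simp add: eq_divide_eq)
    qed
    moreover have "(t-p)*(1-2*t)^2/(t*(1-t)) \<ge> 0" using t t0 by auto
    ultimately show "\<exists>y. (F has_real_derivative y) (at t) \<and> 0 \<le> y" by auto
  next
    show "continuous_on {p..q} F"
    proof (cases "p = 0")
      case True
      have "continuous_on {p..q} (\<lambda>t. ln (1 - t) :: real)"
        using q by (intro continuous_intros) auto
      thus ?thesis unfolding F_def True by (auto intro!: continuous_intros)
    next
      case False
      hence "0 < p" using p by auto
      thus ?thesis unfolding F_def using q p by (auto intro!: continuous_intros)
    qed
  qed
  moreover have "F p = 0" unfolding F_def by simp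
  ultimately show ?thesis unfolding F_def bkl_def by simp
qed

lemma pinsker_bin:
  fixes p q :: real
  assumes p: "0 \<le> p" "p \<le> 1" and q: "0 < q" "q < 1"
  shows "2 * (p - q)^2 \<le> bkl p q"
proof (cases "p \<le> q")
  case True thus ?thesis using pinsker_bin_aux[of p q] p q by auto
next
  case False
  have "2 * ((1-p) - (1-q))^2 \<le> bkl (1-p) (1-q)"
    using pinsker_bin_aux[of "1-p" "1-q"] p q False by auto
  thus ?thesis unfolding bkl_def by (simp add: power2_commute algebra_simps)
qed

lemma ln_ge_one_minus_inv: "0 < (x::real) \<Longrightarrow> 1 - 1/x \<le> ln x"
  using ln_le_minus_one[of "1/x"] by (simp add: ln_div)

lemma log_sum:
  fixes a b :: "nat \<Rightarrow> real"
  assumes fin: "finite A" and ne: "A \<noteq> {}"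
    and a: "\<And>y. y \<in> A \<Longrightarrow> 0 \<le> a y" and b: "\<And>y. y \<in> A \<Longrightarrow> 0 < b y"
  shows "(\<Sum>y\<in>A. a y) * (ln (\<Sum>y\<in>A. a y) - ln (\<Sum>y\<in>A. b y))
           \<le> (\<Sum>y\<in>A. a y * (ln (a y) - ln (b y)))"
proof -
  define S where "S = (\<Sum>y\<in>A. a y)"
  define Q where "Q = (\<Sum>y\<in>A. b y)"
  have Q: "Q > 0" unfolding Q_def using fin ne b by (intro sum_pos) auto
  have S0: "S \<ge> 0" unfolding S_def using a by (intro sum_nonneg) auto
  show ?thesis
  proof (cases "S = 0")
    case True
    hence "\<forall>y\<in>A. a y = 0" using sum_nonneg_eq_0_iff[OF fin] a unfolding S_def by blast
    thus ?thesis using True unfolding S_def by simp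
  next
    case False
    hence S: "S > 0" using S0 by auto
    have trm: "a y - b y * S / Q \<le> a y * (ln (a y) - ln (b y)) - a y * (ln S - ln Q)"
      if y: "y \<in> A" for y
    proof (cases "a y = 0")
      case True thus ?thesis using b[OF y] S Q by simp
    next
      case False
      hence ay: "a y > 0" using a[OF y] by auto
      have x: "a y * Q / (b y * S) > 0" using ay b[OF y] S Q by simp
      have "1 - 1 / (a y * Q / (b y * S)) \<le> ln (a y * Q / (b y * S))"
        by (rule ln_ge_one_minus_inv[OF x])
      also have "ln (a y * Q / (b y * S)) = ln (a y) + ln Q - ln (b y) - ln S"
        using ay b[OF y] S Q by (simp add: ln_div ln_mult)
      finally have "a y * (1 - 1 / (a y * Q / (b y * S))) \<le> a y * (ln (a y) + ln Q - ln (b y) - ln S)"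
        using ay by (simp add: mult_left_mono)
      moreover have "a y * (1 - 1 / (a y * Q / (b y * S))) = a y - b y * S / Q"
        using ay b[OF y] S Q by (simp add: field_simps)
      ultimately show ?thesis by (simp add: algebra_simps)
    qed
    have "(\<Sum>y\<in>A. a y - b y * S / Q) \<le> (\<Sum>y\<in>A. a y * (ln (a y) - ln (b y)) - a y * (ln S - ln Q))"
      using trm by (rule sum_mono)
    moreover have "(\<Sum>y\<in>A. a y - b y * S / Q) = 0"
      using Q by (simp add: sum_subtractf sum_divide_distrib[symmetric] sum_distrib_right[symmetric] S_def[symmetric] Q_def[symmetric])
    moreover have "(\<Sum>y\<in>A. a y * (ln (a y) - ln (b y)) - a y * (ln S - ln Q)) =
        (\<Sum>y\<in>A. a y * (ln (a y) - ln (b y))) - S * (ln S - ln Q)"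
      by (simp add: sum_subtractf sum_distrib_right[symmetric] S_def)
    ultimately show ?thesis unfolding S_def Q_def by simp
  qed
qed

section \<open>Pointwise facts about the asymmetric softmax\<close>

definition SE :: "nat \<Rightarrow> (nat \<Rightarrow> real) \<Rightarrow> real" where
  "SE K u = (\<Sum>y=1..K. exp (u y))"

definition ME :: "nat \<Rightarrow> (nat \<Rightarrow> real) \<Rightarrow> real" where
  "ME K u = Max ((\<lambda>y. exp (u y)) ` {1..K})"

lemma argmaxK_prop:
  assumes "K \<ge> 1"
  shows "argmaxK K u \<in> {1..K} \<and> (\<forall>y\<in>{1..K}. u y \<le> u (argmaxK K u))"
proof -
  have fin: "finite (u ` {1..K})" and ne: "u ` {1..K} \<noteq> {}" using assms by auto
  obtain c where c: "c \<in> {1..K}" "u c = Max (u ` {1..K})"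
    using Max_in[OF fin ne] by auto
  have "c \<in> {1..K} \<and> (\<forall>y'\<in>{1..K}. u y' \<le> u c)" using c fin by auto
  thus ?thesis unfolding argmaxK_def by (rule LeastI)
qed

lemma ME_eq:
  assumes "K \<ge> 1"
  shows "ME K u = exp (u (argmaxK K u))"
  unfolding ME_def using argmaxK_prop[OF assms, of u]
  by (intro Max_eqI) auto

lemma SE_pos: "K \<ge> 1 \<Longrightarrow> SE K u > 0"
  unfolding SE_def by (intro sum_pos) auto

lemma SE_minus_exp_pos:
  assumes "K > 1" "a \<in> {1..K}"
  shows "SE K u - exp (u a) > 0"
proof -
  have "SE K u = exp (u a) + (\<Sum>y\<in>{1..K}-{a}. exp (u y))"
    unfolding SE_def using assms by (simp add: sum.remove)
  moreover have "{1..K}-{a} \<noteq> {}"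
  proof
    assume "{1..K}-{a} = {}"
    hence "{1..K} \<subseteq> {a}" by auto
    moreover have "1 \<in> {1..K}" "K \<in> {1..K}" using assms by auto
    ultimately have "1 = a" "K = a" by auto
    thus False using assms by simp
  qed
  hence "(\<Sum>y\<in>{1..K}-{a}. exp (u y)) > 0" by (intro sum_pos) auto
  ultimately show ?thesis by simp
qed

lemma SE_minus_ME_pos: "K > 1 \<Longrightarrow> SE K u - ME K u > 0"
  using ME_eq[of K u] SE_minus_exp_pos[of K "argmaxK K u" u] argmaxK_prop[of K u] by auto

lemma psi_class: "y \<noteq> K + 1 \<Longrightarrow> psi_t K u y = exp (u y) / SE K u"
  unfolding psi_t_def SE_def by simp

lemma psi_defer: "psi_t K u (K+1) = exp (u (K+1)) / (exp (u (K+1)) + SE K u - ME K u)"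
  unfolding psi_t_def SE_def ME_def by (simp add: add.commute)

lemma psi_defer': "psi_t K u (Suc K) = exp (u (Suc K)) / (exp (u (Suc K)) + SE K u - ME K u)"
  using psi_defer[of K u] by simp

lemma psi_class_bounds:
  assumes "K > 1" "y \<in> {1..K}"
  shows "0 < psi_t K u y" "psi_t K u y < 1"
proof -
  have "y \<noteq> K+1" using assms by auto
  thus "0 < psi_t K u y" using SE_pos[of K u] assms by (simp add: psi_class)
  show "psi_t K u y < 1" using \<open>y \<noteq> K+1\<close> SE_minus_exp_pos[OF assms, of u] SE_pos[of K u] assms
    by (simp add: psi_class)
qed

lemma psi_class_sum:
  assumes "K \<ge> 1"
  shows "(\<Sum>y=1..K. psi_t K u y) = 1"
proof -
  have "(\<Sum>y=1..K. psi_t K u y) = (\<Sum>y=1..K. exp (u y) / SE K u)"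
    by (intro sum.cong) (auto simp: psi_class)
  also have "\<dots> = 1" using SE_pos[OF assms, of u] by (simp add: sum_divide_distrib[symmetric] SE_def)
  finally show ?thesis .
qed

lemma psi_defer_bounds:
  assumes "K > 1"
  shows "0 < psi_t K u (K+1)" "psi_t K u (K+1) < 1"
proof -
  have a: "exp (u (Suc K)) > 0" by simp
  have b: "SE K u - ME K u > 0" using SE_minus_ME_pos[OF assms, of u] by simp
  have c: "exp (u (Suc K)) + SE K u - ME K u > 0" using a b by linarith
  show "0 < psi_t K u (K+1)" using a c by (simp add: psi_defer')
  have d: "exp (u (Suc K)) < exp (u (Suc K)) + SE K u - ME K u" using b by linarith
  show "psi_t K u (K+1) < 1" using c d by (simp add: psi_defer' divide_less_eq)
qed

lemma psi_argmax_ge: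
  assumes "K > 1" "y \<in> {1..K}"
  shows "psi_t K u y \<le> psi_t K u (argmaxK K u)"
proof -
  have h: "argmaxK K u \<in> {1..K}" "u y \<le> u (argmaxK K u)" using argmaxK_prop[of K u] assms by auto
  hence "exp (u y) / SE K u \<le> exp (u (argmaxK K u)) / SE K u"
    using SE_pos[of K u] assms by (simp add: divide_right_mono)
  thus ?thesis using assms h by (simp add: psi_class)
qed

lemma psi_defer_vs_argmax:
  assumes "K > 1"
  shows "u (K+1) > u (argmaxK K u) \<Longrightarrow> psi_t K u (argmaxK K u) \<le> psi_t K u (K+1)"
    and "u (K+1) \<le> u (argmaxK K u) \<Longrightarrow> psi_t K u (K+1) \<le> psi_t K u (argmaxK K u)"
proof -
  define a where "a = exp (u (K+1))"
  define E where "E = exp (u (argmaxK K u))"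
  define S where "S = SE K u"
  have hK: "argmaxK K u \<in> {1..K}" using argmaxK_prop[of K u] assms by auto
  hence ne: "argmaxK K u \<noteq> K+1" by auto
  have SE: "S - E > 0" using SE_minus_ME_pos[OF assms, of u] ME_eq[of K u] assms unfolding S_def E_def by auto
  have E0: "E > 0" "a > 0" unfolding E_def a_def by auto
  have q: "psi_t K u (argmaxK K u) = E / S" using ne unfolding E_def S_def by (simp add: psi_class)
  have p: "psi_t K u (K+1) = a / (a + S - E)" using ME_eq[of K u] assms
    unfolding a_def S_def E_def by (simp add: psi_defer')
  have id: "a / (a + S - E) - E / S = (a - E) * (S - E) / ((a + S - E) * S)"
    using SE E0 by (simp add: field_simps)
  have den: "(a + S - E) * S > 0" using SE E0 by simp
  show "u (K+1) > u (argmaxK K u) \<Longrightarrow> psi_t K u (argmaxK K u) \<le> psi_t K u (K+1)"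
  proof -
    assume "u (K+1) > u (argmaxK K u)"
    hence "a - E > 0" unfolding a_def E_def by simp
    hence "(a - E) * (S - E) / ((a + S - E) * S) \<ge> 0" using SE den by simp
    thus ?thesis using id p q by simp
  qed
  show "u (K+1) \<le> u (argmaxK K u) \<Longrightarrow> psi_t K u (K+1) \<le> psi_t K u (argmaxK K u)"
  proof -
    assume "u (K+1) \<le> u (argmaxK K u)"
    hence "a - E \<le> 0" unfolding a_def E_def by simp
    hence "(a - E) * (S - E) / ((a + S - E) * S) \<le> 0" using SE den
      by (simp add: divide_nonpos_pos mult_nonpos_nonneg)
    thus ?thesis using id p q by simp
  qed
qed

lemma phi_None_iff:
  assumes "K \<ge> 1"
  shows "phi K u = None \<longleftrightarrow> u (K+1) > u (argmaxK K u)"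
proof -
  have "Max (u ` {1..K}) = u (argmaxK K u)"
    using argmaxK_prop[OF assms, of u] by (intro Max_eqI) auto
  thus ?thesis unfolding phi_def by simp
qed

lemma L_psi_nonneg:
  assumes "K > 1" "y \<in> {1..K}"
  shows "0 \<le> L_psi K u y m"
proof -
  have "ln (psi_t K u y) \<le> 0" using psi_class_bounds[OF assms, of u] by simp
  moreover have "ln (psi_t K u (K+1)) \<le> 0" "ln (1 - psi_t K u (K+1)) \<le> 0"
    using psi_defer_bounds[OF assms(1), of u] by simp_all
  ultimately show ?thesis unfolding L_psi_def by auto
qed

section \<open>Conditional (pointwise) risks\<close>

definition isdist :: "nat \<Rightarrow> (nat \<Rightarrow> nat \<Rightarrow> real) \<Rightarrow> bool" where
  "isdist K P \<longleftrightarrow> (\<forall>y\<in>{1..K}. \<forall>m\<in>{1..K}. 0 \<le> P y m) \<and> (\<Sum>y=1..K. \<Sum>m=1..K. P y m) = 1"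

definition eta :: "nat \<Rightarrow> (nat \<Rightarrow> nat \<Rightarrow> real) \<Rightarrow> nat \<Rightarrow> real" where
  "eta K P y = (\<Sum>m=1..K. P y m)"

definition rr :: "nat \<Rightarrow> (nat \<Rightarrow> nat \<Rightarrow> real) \<Rightarrow> real" where
  "rr K P = (\<Sum>y=1..K. P y y)"

definition Hent :: "nat \<Rightarrow> (nat \<Rightarrow> nat \<Rightarrow> real) \<Rightarrow> real" where
  "Hent K P = - (\<Sum>y=1..K. eta K P y * ln (eta K P y)) - rr K P * ln (rr K P)
               - (1 - rr K P) * ln (1 - rr K P)"

definition CL :: "nat \<Rightarrow> (nat \<Rightarrow> nat \<Rightarrow> real) \<Rightarrow> (nat \<Rightarrow> real) \<Rightarrow> real" where
  "CL K P u = (\<Sum>y=1..K. \<Sum>m=1..K. P y m * L_psi K u y m)"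

definition C01 :: "nat \<Rightarrow> (nat \<Rightarrow> nat \<Rightarrow> real) \<Rightarrow> nat \<Rightarrow> real" where
  "C01 K P c = (\<Sum>y=1..K. \<Sum>m=1..K. P y m * (if c \<noteq> y then 1 else 0))"

definition Cdef :: "nat \<Rightarrow> (nat \<Rightarrow> nat \<Rightarrow> real) \<Rightarrow> nat option \<Rightarrow> real" where
  "Cdef K P f = (\<Sum>y=1..K. \<Sum>m=1..K. P y m * loss01_defer f y m)"

definition Meta :: "nat \<Rightarrow> (nat \<Rightarrow> nat \<Rightarrow> real) \<Rightarrow> real" where
  "Meta K P = Max (eta K P ` {1..K})"

lemma eta_nonneg: "isdist K P \<Longrightarrow> 0 \<le> eta K P y" if "y \<in> {1..K}"
  using that unfolding isdist_def eta_def by (auto intro!: sum_nonneg)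

lemma eta_sum: "isdist K P \<Longrightarrow> (\<Sum>y=1..K. eta K P y) = 1"
  unfolding isdist_def eta_def by simp

lemma rr_bounds:
  assumes "isdist K P"
  shows "0 \<le> rr K P" "rr K P \<le> 1"
proof -
  show "0 \<le> rr K P" using assms unfolding isdist_def rr_def by (auto intro!: sum_nonneg)
  have "P y y \<le> eta K P y" if "y \<in> {1..K}" for y
    unfolding eta_def using assms that unfolding isdist_def
    by (intro member_le_sum) auto
  hence "rr K P \<le> (\<Sum>y=1..K. eta K P y)" unfolding rr_def by (intro sum_mono) auto
  thus "rr K P \<le> 1" using eta_sum[OF assms] by simp
qed

lemma sum_if_eq1:
  assumes "finite A" "c \<in> A"
  shows "(\<Sum>y\<in>A. f y * (if c = y then 1 else 0)) = (f c :: real)"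
proof -
  have "(\<Sum>y\<in>A. f y * (if c = y then 1 else 0)) = (\<Sum>y\<in>A. if c = y then f y else 0)"
    by (rule sum.cong) auto
  thus ?thesis using assms by simp
qed

lemma sum_if_eq2:
  assumes "finite A" "c \<in> A"
  shows "(\<Sum>y\<in>A. f y * (if y = c then 1 else 0)) = (f c :: real)"
proof -
  have "(\<Sum>y\<in>A. f y * (if y = c then 1 else 0)) = (\<Sum>y\<in>A. if y = c then f y else 0)"
    by (rule sum.cong) auto
  thus ?thesis using assms by simp
qed

lemma C01_eq:
  assumes "isdist K P" "c \<in> {1..K}"
  shows "C01 K P c = 1 - eta K P c"
proof -
  have "C01 K P c = (\<Sum>y=1..K. eta K P y * (if c \<noteq> y then 1 else 0))"
    unfolding C01_def eta_def by (simp add: sum_distrib_right)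
  also have "\<dots> = (\<Sum>y=1..K. eta K P y - eta K P y * (if c = y then 1 else 0))"
    by (rule sum.cong) auto
  also have "\<dots> = (\<Sum>y=1..K. eta K P y) - (\<Sum>y=1..K. eta K P y * (if c = y then 1 else 0))"
    by (rule sum_subtractf)
  also have "(\<Sum>y=1..K. eta K P y * (if c = y then 1 else 0)) = eta K P c"
    using assms(2) by (intro sum_if_eq1) auto
  finally show ?thesis using eta_sum[OF assms(1)] by simp
qed

lemma Cdef_Some: "isdist K P \<Longrightarrow> c \<in> {1..K} \<Longrightarrow> Cdef K P (Some c) = 1 - eta K P c"
  using C01_eq[of K P c] unfolding Cdef_def C01_def loss01_defer_def by simp

lemma Cdef_None:
  assumes "isdist K P"
  shows "Cdef K P None = 1 - rr K P"
proof -
  have "Cdef K P None = (\<Sum>y=1..K. eta K P y - P y y)"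
    unfolding Cdef_def
  proof (rule sum.cong[OF refl])
    fix y assume y: "y \<in> {1..K}"
    have "(\<Sum>m=1..K. P y m * loss01_defer None y m) = (\<Sum>m=1..K. P y m - P y m * (if m = y then 1 else 0))"
      unfolding loss01_defer_def by (rule sum.cong) auto
    also have "\<dots> = eta K P y - P y y"
      unfolding sum_subtractf eta_def using y by (subst sum_if_eq2) auto
    finally show "(\<Sum>m=1..K. P y m * loss01_defer None y m) = eta K P y - P y y" .
  qed
  also have "\<dots> = 1 - rr K P"
    using eta_sum[OF assms] unfolding rr_def sum_subtractf by simp
  finally show ?thesis .
qed

lemma Meta_prop:
  assumes "K \<ge> 1"
  shows "\<exists>a\<in>{1..K}. Meta K P = eta K P a" "\<And>y. y \<in> {1..K} \<Longrightarrow> eta K P y \<le> Meta K P"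
proof -
  have fin: "finite (eta K P ` {1..K})" and ne: "eta K P ` {1..K} \<noteq> {}" using assms by auto
  show "\<exists>a\<in>{1..K}. Meta K P = eta K P a" using Max_in[OF fin ne] unfolding Meta_def by auto
  show "\<And>y. y \<in> {1..K} \<Longrightarrow> eta K P y \<le> Meta K P" unfolding Meta_def using fin by auto
qed

lemma CL_eq:
  assumes "isdist K P"
  shows "CL K P u = - (\<Sum>y=1..K. eta K P y * ln (psi_t K u y))
     - (1 - rr K P) * ln (1 - psi_t K u (K+1)) - rr K P * ln (psi_t K u (K+1))"
proof -
  define a where "a = ln (1 - psi_t K u (K+1))"
  define b where "b = ln (psi_t K u (K+1))"
  have "CL K P u = (\<Sum>y=1..K. \<Sum>m=1..K. - (P y m * ln (psi_t K u y)) - P y m * a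
                       + (P y m * (if m = y then 1 else 0)) * (a - b))"
    unfolding CL_def L_psi_def a_def[symmetric] b_def[symmetric]
    by (intro sum.cong refl) (auto simp: algebra_simps)
  also have "\<dots> = (\<Sum>y=1..K. - (eta K P y * ln (psi_t K u y)) - eta K P y * a + P y y * (a - b))"
  proof (rule sum.cong[OF refl])
    fix y assume y: "y \<in> {1..K}"
    show "(\<Sum>m=1..K. - (P y m * ln (psi_t K u y)) - P y m * a + (P y m * (if m = y then 1 else 0)) * (a - b))
        = - (eta K P y * ln (psi_t K u y)) - eta K P y * a + P y y * (a - b)"
      unfolding sum.distrib sum_subtractf sum_negf sum_distrib_right[symmetric] eta_def
      using y by (subst sum_if_eq2) auto
  qed
  also have "\<dots> = - (\<Sum>y=1..K. eta K P y * ln (psi_t K u y)) - a + rr K P * (a - b)"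
    unfolding sum.distrib sum_subtractf sum_negf sum_distrib_right[symmetric] rr_def eta_sum[OF assms]
    by simp
  finally show ?thesis unfolding a_def b_def by (simp add: algebra_simps)
qed

definition KL1 :: "nat \<Rightarrow> (nat \<Rightarrow> nat \<Rightarrow> real) \<Rightarrow> (nat \<Rightarrow> real) \<Rightarrow> real" where
  "KL1 K P u = (\<Sum>y=1..K. eta K P y * (ln (eta K P y) - ln (psi_t K u y)))"

lemma KL_decomp:
  assumes "isdist K P"
  shows "CL K P u - Hent K P = KL1 K P u + bkl (rr K P) (psi_t K u (K+1))"
  unfolding CL_eq[OF assms] Hent_def KL1_def bkl_def
  by (simp add: algebra_simps sum_subtractf)

lemma KL1_ge:
  assumes P: "isdist K P" and K: "K > 1" and a: "a \<in> {1..K}"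
  shows "2 * (eta K P a - psi_t K u a)^2 \<le> KL1 K P u"
proof -
  define B where "B = {1..K} - {a}"
  have finB: "finite B" unfolding B_def by simp
  have neB: "B \<noteq> {}"
  proof
    assume "B = {}"
    hence "{1..K} \<subseteq> {a}" unfolding B_def by auto
    moreover have "1 \<in> {1..K}" "K \<in> {1..K}" using K by auto
    ultimately have "1 = a" "K = a" by auto
    thus False using K by simp
  qed
  have sumA: "\<And>f. (\<Sum>y=1..K. f y) = f a + (\<Sum>y\<in>B. f y)"
    unfolding B_def using a by (simp add: sum.remove)
  have e1: "(\<Sum>y\<in>B. eta K P y) = 1 - eta K P a" using sumA[of "eta K P"] eta_sum[OF P] by simp
  have q1: "(\<Sum>y\<in>B. psi_t K u y) = 1 - psi_t K u a" using sumA[of "psi_t K u"] psi_class_sum[of K u] K by simp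
  have "(\<Sum>y\<in>B. eta K P y) * (ln (\<Sum>y\<in>B. eta K P y) - ln (\<Sum>y\<in>B. psi_t K u y))
          \<le> (\<Sum>y\<in>B. eta K P y * (ln (eta K P y) - ln (psi_t K u y)))"
    using finB neB by (intro log_sum) (auto simp: B_def eta_nonneg[OF _ P] psi_class_bounds[OF K])
  hence "bkl (eta K P a) (psi_t K u a) \<le> KL1 K P u"
    unfolding KL1_def bkl_def sumA[of "\<lambda>y. eta K P y * (ln (eta K P y) - ln (psi_t K u y))"] e1 q1
    by simp
  moreover have "2 * (eta K P a - psi_t K u a)^2 \<le> bkl (eta K P a) (psi_t K u a)"
  proof (rule pinsker_bin)
    show "0 \<le> eta K P a" using eta_nonneg[OF a P] .
    have "eta K P a \<le> (\<Sum>y=1..K. eta K P y)"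
      using a eta_nonneg[OF _ P] by (intro member_le_sum) auto
    thus "eta K P a \<le> 1" using eta_sum[OF P] by simp
    show "0 < psi_t K u a" "psi_t K u a < 1" using psi_class_bounds[OF K a] by auto
  qed
  ultimately show ?thesis by simp
qed

lemma KL2_ge:
  assumes P: "isdist K P" and K: "K > 1"
  shows "2 * (rr K P - psi_t K u (K+1))^2 \<le> bkl (rr K P) (psi_t K u (K+1))"
  using rr_bounds[OF P] psi_defer_bounds[OF K] by (intro pinsker_bin) auto

lemma sqrt_bound:
  assumes "x \<ge> 0" "x^2 \<le> y"
  shows "x \<le> sqrt y"
  using assms real_le_rsqrt by blast

lemma sum_sq_bound: "(\<bar>a\<bar> + \<bar>b\<bar>)^2 \<le> 2 * a^2 + 2 * (b::real)^2"
proof -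
  have "0 \<le> (\<bar>a\<bar> - \<bar>b\<bar>)^2" by simp
  thus ?thesis by (simp add: power2_eq_square algebra_simps)
qed

lemma excess_class:
  assumes P: "isdist K P" and K: "K > 1"
  shows "C01 K P (argmaxK K u) - (1 - Meta K P) \<le> sqrt (2 * (CL K P u - Hent K P))"
proof -
  define h where "h = argmaxK K u"
  have h: "h \<in> {1..K}" unfolding h_def using argmaxK_prop[of K u] K by auto
  obtain a where a: "a \<in> {1..K}" "Meta K P = eta K P a" using Meta_prop[where K=K and P=P] K by auto
  have qa: "psi_t K u a \<le> psi_t K u h" unfolding h_def using psi_argmax_ge[OF K a(1)] .
  have lhs: "C01 K P h - (1 - Meta K P) \<le> \<bar>eta K P a - psi_t K u a\<bar> + \<bar>eta K P h - psi_t K u h\<bar>"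
    using C01_eq[OF P h] a qa by linarith
  have k1: "2 * (eta K P a - psi_t K u a)^2 \<le> KL1 K P u" using KL1_ge[OF P K a(1)] .
  have k2: "2 * (eta K P h - psi_t K u h)^2 \<le> KL1 K P u" using KL1_ge[OF P K h] .
  have k3: "0 \<le> bkl (rr K P) (psi_t K u (K+1))" using KL2_ge[OF P K, of u]
    by (meson order_trans zero_le_power2 mult_nonneg_nonneg zero_le_numeral)
  have "\<bar>eta K P a - psi_t K u a\<bar> + \<bar>eta K P h - psi_t K u h\<bar> \<le> sqrt (2 * (CL K P u - Hent K P))"
    using sum_sq_bound[of "eta K P a - psi_t K u a" "eta K P h - psi_t K u h"] k1 k2 k3
      KL_decomp[OF P, of u] by (intro sqrt_bound) auto
  thus ?thesis using lhs unfolding h_def by linarith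
qed

lemma excess_defer:
  assumes P: "isdist K P" and K: "K > 1"
  shows "Cdef K P (phi K u) - min (1 - rr K P) (1 - Meta K P) \<le> sqrt (2 * (CL K P u - Hent K P))"
proof -
  define h where "h = argmaxK K u"
  define r where "r = rr K P"
  define s where "s = psi_t K u (K+1)"
  have h: "h \<in> {1..K}" unfolding h_def using argmaxK_prop[of K u] K by auto
  obtain a where a: "a \<in> {1..K}" "Meta K P = eta K P a" using Meta_prop[where K=K and P=P] K by auto
  have Ma: "eta K P h \<le> Meta K P" using Meta_prop(2)[where K=K and P=P, OF _ h] K by auto
  have qa: "psi_t K u a \<le> psi_t K u h" unfolding h_def using psi_argmax_ge[OF K a(1)] .
  have k1: "2 * (eta K P a - psi_t K u a)^2 \<le> KL1 K P u" using KL1_ge[OF P K a(1)] .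
  have k2: "2 * (eta K P h - psi_t K u h)^2 \<le> KL1 K P u" using KL1_ge[OF P K h] .
  have k3: "2 * (r - s)^2 \<le> bkl r s" unfolding r_def s_def using KL2_ge[OF P K, of u] .
  have k1': "0 \<le> KL1 K P u" using k1 by (meson order_trans zero_le_power2 mult_nonneg_nonneg zero_le_numeral)
  have k3': "0 \<le> bkl r s" using k3 by (meson order_trans zero_le_power2 mult_nonneg_nonneg zero_le_numeral)
  have dec: "CL K P u - Hent K P = KL1 K P u + bkl r s" unfolding r_def s_def using KL_decomp[OF P] .
  have b1: "\<bar>eta K P a - psi_t K u a\<bar> + \<bar>r - s\<bar> \<le> sqrt (2 * (CL K P u - Hent K P))"
    using sum_sq_bound[of "eta K P a - psi_t K u a" "r - s"] k1 k3 k1' k3' dec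
    by (intro sqrt_bound) auto
  have b2: "\<bar>eta K P h - psi_t K u h\<bar> + \<bar>r - s\<bar> \<le> sqrt (2 * (CL K P u - Hent K P))"
    using sum_sq_bound[of "eta K P h - psi_t K u h" "r - s"] k2 k3 k1' k3' dec
    by (intro sqrt_bound) auto
  have b3: "\<bar>eta K P a - psi_t K u a\<bar> + \<bar>eta K P h - psi_t K u h\<bar> \<le> sqrt (2 * (CL K P u - Hent K P))"
    using sum_sq_bound[of "eta K P a - psi_t K u a" "eta K P h - psi_t K u h"] k1 k2 k3' dec
    by (intro sqrt_bound) auto
  show ?thesis
  proof (cases "u (K+1) > u h")
    case True
    hence phi: "phi K u = None" using phi_None_iff[of K u] K unfolding h_def by auto
    have "psi_t K u h \<le> s" using psi_defer_vs_argmax(1)[OF K] True unfolding h_def s_def by auto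
    hence "Cdef K P (phi K u) - min (1 - r) (1 - Meta K P) \<le> \<bar>eta K P a - psi_t K u a\<bar> + \<bar>r - s\<bar>"
      unfolding phi Cdef_None[OF P] r_def[symmetric] using a qa by linarith
    thus ?thesis using b1 unfolding r_def by linarith
  next
    case False
    hence "phi K u \<noteq> None" using phi_None_iff[of K u] K unfolding h_def by auto
    hence phi: "phi K u = Some h" unfolding h_def phi_def by (auto split: if_splits)
    have "s \<le> psi_t K u h" using psi_defer_vs_argmax(2)[OF K] False unfolding h_def s_def by auto
    hence "Cdef K P (phi K u) - min (1 - r) (1 - Meta K P) \<le>
          max (\<bar>eta K P h - psi_t K u h\<bar> + \<bar>r - s\<bar>)
              (\<bar>eta K P a - psi_t K u a\<bar> + \<bar>eta K P h - psi_t K u h\<bar>)"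
      unfolding phi Cdef_Some[OF P h] using a qa by linarith
    thus ?thesis using b2 b3 unfolding r_def by linarith
  qed
qed

section \<open>Near-optimal scores\<close>

definition ustar :: "nat \<Rightarrow> real \<Rightarrow> (nat \<Rightarrow> nat \<Rightarrow> real) \<Rightarrow> nat \<Rightarrow> real" where
  "ustar K e P j = (if j = K + 1 then
       ln ((1 + real K * e - Max ((\<lambda>y. eta K P y + e) ` {1..K})) * (rr K P + e) / (1 - rr K P + e))
     else ln (eta K P j + e))"

lemma xlog_aux: "0 \<le> (x::real) \<Longrightarrow> 0 < e \<Longrightarrow> x * (ln x - ln (x + e)) \<le> 0"
  by (cases "x = 0") (auto intro!: mult_nonneg_nonpos)

lemma ln_one_plus_le: "0 \<le> (x::real) \<Longrightarrow> ln (1 + x) \<le> x"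
  using ln_le_minus_one[of "1 + x"] by simp

lemma ustar_good:
  assumes P: "isdist K P" and K: "K > 1" and e: "e > 0"
  shows "CL K P (ustar K e P) \<le> Hent K P + (real K + 2) * e"
proof -
  define u where "u = ustar K e P"
  define r where "r = rr K P"
  have r: "0 \<le> r" "r \<le> 1" unfolding r_def using rr_bounds[OF P] by auto
  have eu: "exp (u y) = eta K P y + e" if "y \<in> {1..K}" for y
    using that eta_nonneg[OF that P] e unfolding u_def ustar_def by auto
  have SE: "SE K u = 1 + real K * e"
  proof -
    have "SE K u = (\<Sum>y=1..K. eta K P y + e)" unfolding SE_def by (rule sum.cong) (auto simp: eu)
    thus ?thesis using eta_sum[OF P] by (simp add: sum.distrib)
  qed
  have ME: "ME K u = Max ((\<lambda>y. eta K P y + e) ` {1..K})"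
    unfolding ME_def by (rule arg_cong[where f=Max], rule image_cong) (auto simp: eu)
  define D where "D = SE K u - ME K u"
  have D: "D > 0" unfolding D_def using SE_minus_ME_pos[OF K] .
  define a where "a = D * (r + e) / (1 - r + e)"
  have a: "a > 0" unfolding a_def using D r e by auto
  have uK: "u (K+1) = ln a" unfolding a_def D_def SE ME r_def unfolding u_def ustar_def by simp
  have s: "psi_t K u (K+1) = (r + e) / (1 + 2 * e)"
  proof -
    have "psi_t K u (K+1) = a / (a + D)" unfolding psi_defer D_def uK using a by simp
    also have "\<dots> = (r + e) / (1 + 2 * e)"
    proof -
      have c: "1 - r + e > 0" using r e by simp
      have s1: "a + D = D * (1 + 2*e) / (1 - r + e)" unfolding a_def using c by (simp add: field_simps)
      have "a / (a + D) = (D * (r + e) / (1 - r + e)) / (D * (1 + 2*e) / (1 - r + e))"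
        unfolding s1 unfolding a_def ..
      also have "\<dots> = (D * (r + e)) / (D * (1 + 2*e))" using c by simp
      also have "\<dots> = (r + e) / (1 + 2 * e)" using D by simp
      finally show ?thesis .
    qed
    finally show ?thesis .
  qed
  have s1: "1 - psi_t K u (K+1) = (1 - r + e) / (1 + 2 * e)"
    unfolding s using e by (simp add: field_simps)
  have q: "psi_t K u y = (eta K P y + e) / (1 + real K * e)" if "y \<in> {1..K}" for y
    using that by (simp add: psi_class eu SE)
  have Ke: "1 + real K * e > 0" using e by (simp add: add_pos_nonneg)
  have KL1: "KL1 K P u \<le> ln (1 + real K * e)"
  proof -
    have "KL1 K P u \<le> (\<Sum>y=1..K. eta K P y * ln (1 + real K * e))"
      unfolding KL1_def
    proof (rule sum_mono)
      fix y assume y: "y \<in> {1..K}"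
      have eq: "ln (psi_t K u y) = ln (eta K P y + e) - ln (1 + real K * e)"
        using q[OF y] eta_nonneg[OF y P] e Ke by (simp add: ln_div)
      show "eta K P y * (ln (eta K P y) - ln (psi_t K u y)) \<le> eta K P y * ln (1 + real K * e)"
        unfolding eq using xlog_aux[OF eta_nonneg[OF y P] e] by (simp add: algebra_simps)
    qed
    also have "\<dots> = ln (1 + real K * e)" using eta_sum[OF P] by (simp add: sum_distrib_right[symmetric])
    finally show ?thesis .
  qed
  have KL2: "bkl r (psi_t K u (K+1)) \<le> ln (1 + 2 * e)"
  proof -
    have l1: "ln (psi_t K u (K+1)) = ln (r + e) - ln (1 + 2 * e)"
      unfolding s using r e by (simp add: ln_div)
    have l2: "ln (1 - psi_t K u (K+1)) = ln (1 - r + e) - ln (1 + 2 * e)"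
      unfolding s1 using r e by (simp add: ln_div)
    have "bkl r (psi_t K u (K+1)) = r * (ln r - ln (r + e)) + (1 - r) * (ln (1 - r) - ln (1 - r + e))
          + ln (1 + 2 * e)"
      unfolding bkl_def l1 l2 by (simp add: algebra_simps)
    moreover have "r * (ln r - ln (r + e)) \<le> 0" using xlog_aux[OF r(1) e] .
    moreover have "(1 - r) * (ln (1 - r) - ln (1 - r + e)) \<le> 0" using xlog_aux[of "1 - r" e] r e by simp
    ultimately show ?thesis by linarith
  qed
  have "CL K P u - Hent K P \<le> real K * e + 2 * e"
    using KL_decomp[OF P, of u] KL1 KL2 ln_one_plus_le[of "real K * e"] ln_one_plus_le[of "2 * e"] e
    unfolding r_def by simp
  thus ?thesis unfolding u_def by (simp add: algebra_simps)
qed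

section \<open>Scores only matter on indices 1..K+1\<close>

definition restrK :: "nat \<Rightarrow> (nat \<Rightarrow> real) \<Rightarrow> nat \<Rightarrow> real" where
  "restrK K u j = (if j \<in> {1..K+1} then u j else 0)"

lemma restrK_eq: "j \<in> {1..K+1} \<Longrightarrow> restrK K u j = u j"
  unfolding restrK_def by simp

lemma psi_restrK: "y \<in> {1..K+1} \<Longrightarrow> psi_t K (restrK K u) y = psi_t K u y"
proof -
  assume y: "y \<in> {1..K+1}"
  have s1: "(\<Sum>y'=1..K+1. exp (restrK K u y')) = (\<Sum>y'=1..K+1. exp (u y'))"
    by (intro sum.cong) (auto simp: restrK_eq)
  have s2: "(\<Sum>y'=1..K. exp (restrK K u y')) = (\<Sum>y'=1..K. exp (u y'))"
    by (intro sum.cong) (auto simp: restrK_eq)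
  have s3: "(\<lambda>y'. exp (restrK K u y')) ` {1..K} = (\<lambda>y'. exp (u y')) ` {1..K}"
    by (intro image_cong) (auto simp: restrK_eq)
  show ?thesis unfolding psi_t_def s1 s2 s3 using y by (simp add: restrK_eq)
qed

lemma L_psi_restrK: "y \<in> {1..K} \<Longrightarrow> L_psi K (restrK K u) y m = L_psi K u y m"
  unfolding L_psi_def by (simp add: psi_restrK)

lemma argmaxK_restrK: "argmaxK K (restrK K u) = argmaxK K u"
proof -
  have "(y \<in> {1..K} \<and> (\<forall>y'\<in>{1..K}. restrK K u y' \<le> restrK K u y)) \<longleftrightarrow>
        (y \<in> {1..K} \<and> (\<forall>y'\<in>{1..K}. u y' \<le> u y))" for y
    by (auto simp: restrK_eq)
  thus ?thesis unfolding argmaxK_def by simp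
qed

lemma phi_restrK: "phi K (restrK K u) = phi K u"
proof -
  have s3: "restrK K u ` {1..K} = u ` {1..K}"
    by (intro image_cong) (auto simp: restrK_eq)
  show ?thesis unfolding phi_def s3 argmaxK_restrK by (simp add: restrK_eq)
qed

lemma CL_restrK: "CL K P (restrK K u) = CL K P u"
  unfolding CL_def by (intro sum.cong refl) (simp add: L_psi_restrK)

lemma negxlnx: "0 \<le> (x::real) \<Longrightarrow> x \<le> 1 \<Longrightarrow> 0 \<le> - (x * ln x) \<and> - (x * ln x) \<le> 1"
proof (cases "x = 0")
  case False
  assume x: "0 \<le> x" "x \<le> 1"
  hence xp: "x > 0" using False by simp
  have "ln x \<le> 0" using x xp by simp
  moreover have "1 - 1/x \<le> ln x" using ln_ge_one_minus_inv[OF xp] .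
  hence "x * (1 - 1/x) \<le> x * ln x" using xp by (simp add: mult_left_mono)
  hence "x - 1 \<le> x * ln x" using xp by (simp add: algebra_simps)
  ultimately show ?thesis using x xp by (auto simp: mult_nonneg_nonpos)
qed simp

lemma eta_le1: "isdist K P \<Longrightarrow> y \<in> {1..K} \<Longrightarrow> eta K P y \<le> 1"
proof -
  assume P: "isdist K P" and y: "y \<in> {1..K}"
  have "eta K P y \<le> (\<Sum>y'=1..K. eta K P y')" using y eta_nonneg[OF _ P] by (intro member_le_sum) auto
  thus ?thesis using eta_sum[OF P] by simp
qed

lemma Hent_bounds:
  assumes P: "isdist K P"
  shows "0 \<le> Hent K P" "Hent K P \<le> real K + 2"
proof -
  have e: "0 \<le> - (eta K P y * ln (eta K P y)) \<and> - (eta K P y * ln (eta K P y)) \<le> 1" if "y \<in> {1..K}" for y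
    using negxlnx[OF eta_nonneg[OF that P] eta_le1[OF P that]] .
  have r1: "0 \<le> - (rr K P * ln (rr K P)) \<and> - (rr K P * ln (rr K P)) \<le> 1"
    using negxlnx rr_bounds[OF P] by auto
  have r2: "0 \<le> - ((1 - rr K P) * ln (1 - rr K P)) \<and> - ((1 - rr K P) * ln (1 - rr K P)) \<le> 1"
    using negxlnx[of "1 - rr K P"] rr_bounds[OF P] by auto
  have H: "Hent K P = (\<Sum>y=1..K. - (eta K P y * ln (eta K P y))) + - (rr K P * ln (rr K P))
      + - ((1 - rr K P) * ln (1 - rr K P))"
    unfolding Hent_def by (simp add: sum_negf)
  have "0 \<le> (\<Sum>y=1..K. - (eta K P y * ln (eta K P y)))" using e by (intro sum_nonneg) auto
  thus "0 \<le> Hent K P" unfolding H using r1 r2 by linarith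
  have "(\<Sum>y=1..K. - (eta K P y * ln (eta K P y))) \<le> (\<Sum>y=1..K. 1)" using e by (intro sum_mono) auto
  thus "Hent K P \<le> real K + 2" unfolding H using r1 r2 by simp
qed

lemma Meta_bounds:
  assumes P: "isdist K P" and K: "K \<ge> 1"
  shows "0 \<le> Meta K P" "Meta K P \<le> 1"
  using Meta_prop(1)[OF K, of P] eta_nonneg[OF _ P] eta_le1[OF P] by auto

section \<open>Disintegration of the joint distribution\<close>

lemma argmax_meas:
  assumes [measurable]: "\<And>j. (\<lambda>x. G x j) \<in> borel_measurable M"
  shows "(\<lambda>x. argmaxK K (G x)) \<in> M \<rightarrow>\<^sub>M count_space UNIV"
  unfolding argmaxK_def by measurable

lemma phi_meas:
  assumes [measurable]: "\<And>j. (\<lambda>x. G x j) \<in> borel_measurable M"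
  shows "(\<lambda>x. phi K (G x)) \<in> M \<rightarrow>\<^sub>M count_space UNIV"
  unfolding phi_def argmaxK_def by measurable

locale dsetup =
  fixes Xs :: "'a measure" and D :: "('a \<times> nat \<times> nat) measure" and K :: nat
  assumes K: "K > 1" and PD: "prob_space D"
    and sD: "sets D = sets (Xs \<Otimes>\<^sub>M count_space {1..K} \<Otimes>\<^sub>M count_space {1..K})"
begin

lemma spD: "space D = space Xs \<times> {1..K} \<times> {1..K}"
  using sets_eq_imp_space_eq[OF sD] by (simp add: space_pair_measure)

lemma measD: "D \<rightarrow>\<^sub>M N = (Xs \<Otimes>\<^sub>M count_space {1..K} \<Otimes>\<^sub>M count_space {1..K}) \<rightarrow>\<^sub>M N"
  by (rule measurable_cong_sets[OF sD refl])

lemma fst_meas: "fst \<in> D \<rightarrow>\<^sub>M Xs"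
  unfolding measD by measurable

lemma meas_D:
  assumes "\<And>y m. y \<in> {1..K} \<Longrightarrow> m \<in> {1..K} \<Longrightarrow> (\<lambda>x. f x y m) \<in> Xs \<rightarrow>\<^sub>M N"
  shows "(\<lambda>z. f (fst z) (fst (snd z)) (snd (snd z))) \<in> D \<rightarrow>\<^sub>M N"
  unfolding measD
proof (rule measurable_compose_countable'[where f="\<lambda>i z. f (fst z) i (snd (snd z))" and g="\<lambda>z. fst (snd z)" and I="{1..K}"])
  fix i assume i: "i \<in> {1..K}"
  show "(\<lambda>z. f (fst z) i (snd (snd z))) \<in> (Xs \<Otimes>\<^sub>M count_space {1..K} \<Otimes>\<^sub>M count_space {1..K}) \<rightarrow>\<^sub>M N"
  proof (rule measurable_compose_countable'[where f="\<lambda>j z. f (fst z) i j" and g="\<lambda>z. snd (snd z)" and I="{1..K}"])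
    fix j assume j: "j \<in> {1..K}"
    show "(\<lambda>z. f (fst z) i j) \<in> (Xs \<Otimes>\<^sub>M count_space {1..K} \<Otimes>\<^sub>M count_space {1..K}) \<rightarrow>\<^sub>M N"
      using measurable_compose[OF measurable_fst assms[OF i j]] by simp
  qed measurable
qed measurable

definition mu :: "'a measure" where "mu = distr D Xs fst"

lemma sets_mu[simp]: "sets mu = sets Xs" unfolding mu_def by simp
lemma space_mu[simp]: "space mu = space Xs" unfolding mu_def by simp
lemma meas_mu: "mu \<rightarrow>\<^sub>M N = Xs \<rightarrow>\<^sub>M N" by (rule measurable_cong_sets) auto
lemma prob_mu: "prob_space mu" unfolding mu_def by (rule prob_space.prob_space_distr[OF PD fst_meas])
lemma sf_mu: "sigma_finite_measure mu" using prob_space_imp_sigma_finite[OF prob_mu] .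

definition ind :: "nat \<Rightarrow> nat \<Rightarrow> 'a \<times> nat \<times> nat \<Rightarrow> ennreal" where
  "ind y m z = (if fst (snd z) = y \<and> snd (snd z) = m then 1 else 0)"

lemma ind_meas: "ind y m \<in> borel_measurable D"
proof -
  have "(\<lambda>z. (\<lambda>x y' m'. if y' = y \<and> m' = m then 1 else 0 :: ennreal) (fst z) (fst (snd z)) (snd (snd z))) \<in> borel_measurable D"
    by (rule meas_D) simp
  thus ?thesis unfolding ind_def by simp
qed

definition nu :: "nat \<Rightarrow> nat \<Rightarrow> 'a measure" where
  "nu y m = distr (density D (ind y m)) Xs fst"

lemma fst_meas_dens: "fst \<in> density D h \<rightarrow>\<^sub>M Xs"
  using fst_meas by (simp add: measurable_cong_sets[OF sets_density refl])

lemma nu_le: 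
  assumes A: "A \<in> sets Xs"
  shows "emeasure (nu y m) A \<le> emeasure mu A"
proof -
  have "emeasure (nu y m) A = emeasure (density D (ind y m)) (fst -` A \<inter> space D)"
    unfolding nu_def using A fst_meas_dens by (simp add: emeasure_distr)
  also have "\<dots> = \<integral>\<^sup>+ z. ind y m z * indicator (fst -` A \<inter> space D) z \<partial>D"
    using ind_meas A fst_meas by (subst emeasure_density) (auto simp: measurable_sets)
  also have "\<dots> \<le> \<integral>\<^sup>+ z. indicator (fst -` A \<inter> space D) z \<partial>D"
    by (intro nn_integral_mono) (auto simp: ind_def indicator_def)
  also have "\<dots> = emeasure D (fst -` A \<inter> space D)"
    using A fst_meas by (simp add: measurable_sets)
  also have "\<dots> = emeasure mu A" unfolding mu_def using A fst_meas by (simp add: emeasure_distr)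
  finally show ?thesis .
qed

lemma nu_ac: "absolutely_continuous mu (nu y m)"
  unfolding absolutely_continuous_def
proof
  fix A assume "A \<in> null_sets mu"
  hence A: "A \<in> sets Xs" "emeasure mu A = 0" by auto
  hence "emeasure (nu y m) A = 0" using nu_le[OF A(1), of y m] by simp
  moreover have "A \<in> sets (nu y m)" using A unfolding nu_def by simp
  ultimately show "A \<in> null_sets (nu y m)" by auto
qed

definition p :: "nat \<Rightarrow> nat \<Rightarrow> 'a \<Rightarrow> ennreal" where
  "p y m = RN_deriv mu (nu y m)"

lemma p_meas[measurable]: "p y m \<in> borel_measurable Xs"
  using borel_measurable_RN_deriv[of mu "nu y m"] unfolding p_def meas_mu .

lemma dens_p: "density mu (p y m) = nu y m"
  unfolding p_def by (rule sigma_finite_measure.density_RN_deriv[OF sf_mu nu_ac]) (simp add: nu_def)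

lemma sum_ind:
  assumes "y0 \<in> {1..K}" "m0 \<in> {1..K}"
  shows "(\<Sum>y=1..K. \<Sum>m=1..K. (if y0 = y \<and> m0 = m then 1 else 0) * F y m) = (F y0 m0 :: ennreal)"
proof -
  have inner: "(\<Sum>m=1..K. (if y0 = y \<and> m0 = m then 1 else 0) * F y m) = (if y0 = y then F y m0 else 0)" for y
  proof -
    have "(\<Sum>m=1..K. (if y0 = y \<and> m0 = m then 1 else 0) * F y m)
        = (\<Sum>m=1..K. if m0 = m then (if y0 = y then F y m else 0) else 0)"
      by (intro sum.cong) auto
    also have "\<dots> = (if y0 = y then F y m0 else 0)"
      using assms(2) by simp
    finally show ?thesis .
  qed
  show ?thesis unfolding inner using assms(1) by simp
qed

lemma disint:
  assumes fm: "\<And>y m. y \<in> {1..K} \<Longrightarrow> m \<in> {1..K} \<Longrightarrow> (\<lambda>x. f x y m) \<in> borel_measurable Xs"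
  shows "(\<integral>\<^sup>+ z. f (fst z) (fst (snd z)) (snd (snd z)) \<partial>D) =
         (\<integral>\<^sup>+ x. (\<Sum>y=1..K. \<Sum>m=1..K. p y m x * f x y m) \<partial>mu)"
proof -
  have fmD: "(\<lambda>z. f (fst z) y m) \<in> borel_measurable D" if "y \<in> {1..K}" "m \<in> {1..K}" for y m
    using measurable_compose[OF fst_meas fm[OF that]] .
  have "(\<integral>\<^sup>+ z. f (fst z) (fst (snd z)) (snd (snd z)) \<partial>D) =
        (\<integral>\<^sup>+ z. (\<Sum>y=1..K. \<Sum>m=1..K. ind y m z * f (fst z) y m) \<partial>D)"
  proof (rule nn_integral_cong)
    fix z assume "z \<in> space D"
    then obtain x y0 m0 where z: "z = (x, y0, m0)" "y0 \<in> {1..K}" "m0 \<in> {1..K}" using spD by auto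
    show "f (fst z) (fst (snd z)) (snd (snd z)) = (\<Sum>y=1..K. \<Sum>m=1..K. ind y m z * f (fst z) y m)"
      unfolding ind_def z(1) using sum_ind[OF z(2,3), of "\<lambda>y m. f x y m"] by simp
  qed
  also have "\<dots> = (\<Sum>y=1..K. \<integral>\<^sup>+ z. (\<Sum>m=1..K. ind y m z * f (fst z) y m) \<partial>D)"
    by (rule nn_integral_sum) (auto intro!: borel_measurable_sum borel_measurable_times_ennreal ind_meas fmD)
  also have "\<dots> = (\<Sum>y=1..K. \<Sum>m=1..K. \<integral>\<^sup>+ z. ind y m z * f (fst z) y m \<partial>D)"
    by (intro sum.cong refl nn_integral_sum) (auto intro!: borel_measurable_times_ennreal ind_meas fmD)
  also have "\<dots> = (\<Sum>y=1..K. \<Sum>m=1..K. \<integral>\<^sup>+ x. p y m x * f x y m \<partial>mu)"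
  proof (intro sum.cong refl)
    fix y m assume y: "y \<in> {1..K}" and m: "m \<in> {1..K}"
    have "(\<integral>\<^sup>+ z. ind y m z * f (fst z) y m \<partial>D) = (\<integral>\<^sup>+ z. f (fst z) y m \<partial>density D (ind y m))"
      using ind_meas fmD[OF y m] by (simp add: nn_integral_density)
    also have "\<dots> = (\<integral>\<^sup>+ x. f x y m \<partial>nu y m)"
      unfolding nu_def using fst_meas_dens fm[OF y m] by (simp add: nn_integral_distr)
    also have "\<dots> = (\<integral>\<^sup>+ x. f x y m \<partial>density mu (p y m))" by (simp add: dens_p)
    also have "\<dots> = (\<integral>\<^sup>+ x. p y m x * f x y m \<partial>mu)"
      using fm[OF y m] by (simp add: nn_integral_density meas_mu)
    finally show "(\<integral>\<^sup>+ z. ind y m z * f (fst z) y m \<partial>D) = (\<integral>\<^sup>+ x. p y m x * f x y m \<partial>mu)" .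
  qed
  also have "\<dots> = (\<integral>\<^sup>+ x. (\<Sum>y=1..K. \<Sum>m=1..K. p y m x * f x y m) \<partial>mu)"
  proof -
    have "(\<Sum>y=1..K. \<Sum>m=1..K. \<integral>\<^sup>+ x. p y m x * f x y m \<partial>mu) = (\<Sum>y=1..K. \<integral>\<^sup>+ x. (\<Sum>m=1..K. p y m x * f x y m) \<partial>mu)"
      by (intro sum.cong refl nn_integral_sum[symmetric]) (auto intro!: borel_measurable_times_ennreal fm simp: meas_mu)
    also have "\<dots> = (\<integral>\<^sup>+ x. (\<Sum>y=1..K. \<Sum>m=1..K. p y m x * f x y m) \<partial>mu)"
      by (rule nn_integral_sum[symmetric]) (auto intro!: borel_measurable_sum borel_measurable_times_ennreal fm simp: meas_mu)
    finally show ?thesis .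
  qed
  finally show ?thesis .
qed

lemma sum_p_AE: "AE x in mu. (\<Sum>y=1..K. \<Sum>m=1..K. p y m x) = 1"
proof -
  have eq: "density mu (\<lambda>x. \<Sum>y=1..K. \<Sum>m=1..K. p y m x) = density mu (\<lambda>_. 1)"
  proof (rule measure_eqI)
    show "sets (density mu (\<lambda>x. \<Sum>y=1..K. \<Sum>m=1..K. p y m x)) = sets (density mu (\<lambda>_. 1))" by simp
    fix A assume "A \<in> sets (density mu (\<lambda>x. \<Sum>y=1..K. \<Sum>m=1..K. p y m x))"
    hence A: "A \<in> sets Xs" by simp
    have "emeasure (density mu (\<lambda>x. \<Sum>y=1..K. \<Sum>m=1..K. p y m x)) A
        = (\<integral>\<^sup>+ x. (\<Sum>y=1..K. \<Sum>m=1..K. p y m x) * indicator A x \<partial>mu)"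
      using A by (subst emeasure_density) (auto simp: meas_mu)
    also have "\<dots> = (\<integral>\<^sup>+ x. (\<Sum>y=1..K. \<Sum>m=1..K. p y m x * indicator A x) \<partial>mu)"
      by (simp add: sum_distrib_right)
    also have "\<dots> = (\<integral>\<^sup>+ z. indicator A (fst z) \<partial>D)"
      using disint[of "\<lambda>x y m. indicator A x"] A by simp
    also have "\<dots> = (\<integral>\<^sup>+ x. indicator A x \<partial>mu)"
      unfolding mu_def using nn_integral_distr[OF fst_meas, of "indicator A"] A by simp
    also have "\<dots> = emeasure (density mu (\<lambda>_. 1)) A"
      using A by (subst emeasure_density) auto
    finally show "emeasure (density mu (\<lambda>x. \<Sum>y=1..K. \<Sum>m=1..K. p y m x)) A = emeasure (density mu (\<lambda>_. 1)) A" .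
  qed
  show ?thesis
    by (rule sigma_finite_measure.density_unique[OF sf_mu _ _ eq]) (auto simp: meas_mu intro!: borel_measurable_sum)
qed

definition good :: "'a \<Rightarrow> bool" where
  "good x \<longleftrightarrow> (\<Sum>y=1..K. \<Sum>m=1..K. p y m x) = 1"

definition P :: "nat \<Rightarrow> nat \<Rightarrow> 'a \<Rightarrow> real" where
  "P y m x = (if good x then enn2real (p y m x) else (if y = 1 \<and> m = 1 then 1 else 0))"

definition PP :: "'a \<Rightarrow> nat \<Rightarrow> nat \<Rightarrow> real" where
  "PP x = (\<lambda>y m. P y m x)"

lemma good_meas[measurable]: "Measurable.pred Xs good"
  unfolding good_def by measurable

lemma P_meas[measurable]: "(\<lambda>x. P y m x) \<in> borel_measurable Xs"
  unfolding P_def by measurable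

lemma p_le_one:
  assumes "good x" "y \<in> {1..K}" "m \<in> {1..K}"
  shows "p y m x \<le> 1"
proof -
  have "p y m x \<le> (\<Sum>m'=1..K. p y m' x)" using assms(3) by (intro member_le_sum) auto
  also have "\<dots> \<le> (\<Sum>y'=1..K. \<Sum>m'=1..K. p y' m' x)" using assms(2) by (intro member_le_sum) auto
  finally show ?thesis using assms(1) unfolding good_def by simp
qed

lemma P_dist: "isdist K (PP x)"
proof (cases "good x")
  case True
  have fin: "p y m x < \<top>" if "y \<in> {1..K}" "m \<in> {1..K}" for y m
    using p_le_one[OF True that] ennreal_one_less_top by (rule order_le_less_trans)
  have fin2: "(\<Sum>m=1..K. p y m x) < \<top>" if "y \<in> {1..K}" for y
  proof -
    have "(\<Sum>m=1..K. p y m x) \<le> (\<Sum>y'=1..K. \<Sum>m=1..K. p y' m x)" using that by (intro member_le_sum) auto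
    thus ?thesis using fin that by simp
  qed
  have "(\<Sum>y=1..K. \<Sum>m=1..K. enn2real (p y m x)) = (\<Sum>y=1..K. enn2real (\<Sum>m=1..K. p y m x))"
  proof (intro sum.cong refl)
    fix y assume y: "y \<in> {1..K}"
    show "(\<Sum>m=1..K. enn2real (p y m x)) = enn2real (\<Sum>m=1..K. p y m x)"
      using fin[OF y] by (subst enn2real_sum) auto
  qed
  also have "\<dots> = enn2real (\<Sum>y=1..K. \<Sum>m=1..K. p y m x)"
    using fin2 by (subst enn2real_sum) auto
  finally have "(\<Sum>y=1..K. \<Sum>m=1..K. enn2real (p y m x)) = enn2real (\<Sum>y=1..K. \<Sum>m=1..K. p y m x)" .
  thus ?thesis using True unfolding isdist_def PP_def P_def good_def by simp
next
  case False
  have "(\<Sum>y=1..K. \<Sum>m=1..K. (if y = 1 \<and> m = 1 then 1 else 0 :: real)) = 1"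
  proof -
    have "(\<Sum>y=1..K. \<Sum>m=1..K. (if y = 1 \<and> m = 1 then 1 else 0 :: real))
        = (\<Sum>y=1..K. if y = 1 then (\<Sum>m=1..K. if m = 1 then 1 else 0) else 0)"
      by (intro sum.cong) auto
    thus ?thesis using K by simp
  qed
  thus ?thesis using False unfolding isdist_def PP_def P_def by simp
qed

lemma P_AE: "AE x in mu. \<forall>y\<in>{1..K}. \<forall>m\<in>{1..K}. ennreal (P y m x) = p y m x"
  using sum_p_AE
proof eventually_elim
  case (elim x)
  hence g: "good x" unfolding good_def .
  show ?case
  proof (intro ballI)
    fix y m assume "y \<in> {1..K}" "m \<in> {1..K}"
    hence "p y m x < \<top>" using p_le_one[OF g] ennreal_one_less_top order_le_less_trans by blast
    thus "ennreal (P y m x) = p y m x" using g unfolding P_def by simp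
  qed
qed

lemma disintP:
  assumes fm: "\<And>y m. y \<in> {1..K} \<Longrightarrow> m \<in> {1..K} \<Longrightarrow> (\<lambda>x. f x y m) \<in> borel_measurable Xs"
  shows "(\<integral>\<^sup>+ z. f (fst z) (fst (snd z)) (snd (snd z)) \<partial>D) =
         (\<integral>\<^sup>+ x. (\<Sum>y=1..K. \<Sum>m=1..K. ennreal (P y m x) * f x y m) \<partial>mu)"
proof -
  have "(\<integral>\<^sup>+ z. f (fst z) (fst (snd z)) (snd (snd z)) \<partial>D) =
         (\<integral>\<^sup>+ x. (\<Sum>y=1..K. \<Sum>m=1..K. p y m x * f x y m) \<partial>mu)" by (rule disint[OF fm])
  also have "\<dots> = (\<integral>\<^sup>+ x. (\<Sum>y=1..K. \<Sum>m=1..K. ennreal (P y m x) * f x y m) \<partial>mu)"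
    apply (rule nn_integral_cong_AE)
    using P_AE apply eventually_elim
    by (auto intro!: sum.cong)
  finally show ?thesis .
qed

lemma P_nonneg: "y \<in> {1..K} \<Longrightarrow> m \<in> {1..K} \<Longrightarrow> 0 \<le> P y m x"
  using P_dist[of x] unfolding isdist_def PP_def by auto

lemma RD:
  fixes f :: "'a \<Rightarrow> nat \<Rightarrow> nat \<Rightarrow> real"
  assumes fm: "\<And>y m. y \<in> {1..K} \<Longrightarrow> m \<in> {1..K} \<Longrightarrow> (\<lambda>x. f x y m) \<in> borel_measurable Xs"
    and nn: "\<And>x y m. y \<in> {1..K} \<Longrightarrow> m \<in> {1..K} \<Longrightarrow> 0 \<le> f x y m"
  shows "(\<integral> z. f (fst z) (fst (snd z)) (snd (snd z)) \<partial>D) =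
         (\<integral> x. (\<Sum>y=1..K. \<Sum>m=1..K. P y m x * f x y m) \<partial>mu)"
proof -
  have m1: "(\<lambda>z. f (fst z) (fst (snd z)) (snd (snd z))) \<in> borel_measurable D"
    by (rule meas_D[OF fm])
  have m2: "(\<lambda>x. \<Sum>y=1..K. \<Sum>m=1..K. P y m x * f x y m) \<in> borel_measurable mu"
    unfolding meas_mu by (auto intro!: borel_measurable_sum borel_measurable_times fm)
  have nn1: "AE z in D. 0 \<le> f (fst z) (fst (snd z)) (snd (snd z))"
    by (rule AE_I2) (auto simp: spD intro!: nn)
  have nn2: "AE x in mu. 0 \<le> (\<Sum>y=1..K. \<Sum>m=1..K. P y m x * f x y m)"
    by (rule AE_I2) (auto intro!: sum_nonneg mult_nonneg_nonneg P_nonneg nn)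
  have "(\<integral>\<^sup>+ z. ennreal (f (fst z) (fst (snd z)) (snd (snd z))) \<partial>D)
      = (\<integral>\<^sup>+ x. (\<Sum>y=1..K. \<Sum>m=1..K. ennreal (P y m x) * ennreal (f x y m)) \<partial>mu)"
    by (rule disintP[of "\<lambda>x y m. ennreal (f x y m)"]) (auto intro!: measurable_compose[OF fm measurable_ennreal])
  also have "\<dots> = (\<integral>\<^sup>+ x. ennreal (\<Sum>y=1..K. \<Sum>m=1..K. P y m x * f x y m) \<partial>mu)"
  proof (rule nn_integral_cong)
    fix x
    have "(\<Sum>y=1..K. \<Sum>m=1..K. ennreal (P y m x) * ennreal (f x y m))
        = (\<Sum>y=1..K. \<Sum>m=1..K. ennreal (P y m x * f x y m))"
      by (intro sum.cong refl) (auto simp: ennreal_mult' P_nonneg nn)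
    also have "\<dots> = (\<Sum>y=1..K. ennreal (\<Sum>m=1..K. P y m x * f x y m))"
      by (intro sum.cong refl sum_ennreal) (auto intro!: mult_nonneg_nonneg P_nonneg nn)
    also have "\<dots> = ennreal (\<Sum>y=1..K. \<Sum>m=1..K. P y m x * f x y m)"
      by (intro sum_ennreal) (auto intro!: sum_nonneg mult_nonneg_nonneg P_nonneg nn)
    finally show "(\<Sum>y=1..K. \<Sum>m=1..K. ennreal (P y m x) * ennreal (f x y m))
        = ennreal (\<Sum>y=1..K. \<Sum>m=1..K. P y m x * f x y m)" .
  qed
  finally show ?thesis
    using integral_eq_nn_integral[OF m1 nn1] integral_eq_nn_integral[OF m2 nn2] by simp
qed

lemma sum_enn:
  assumes "\<And>y m. y \<in> {1..K} \<Longrightarrow> m \<in> {1..K} \<Longrightarrow> 0 \<le> F y m"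
  shows "(\<Sum>y=1..K. \<Sum>m=1..K. ennreal (P y m x) * ennreal (F y m)) = ennreal (\<Sum>y=1..K. \<Sum>m=1..K. P y m x * F y m)"
proof -
  have "(\<Sum>y=1..K. \<Sum>m=1..K. ennreal (P y m x) * ennreal (F y m))
      = (\<Sum>y=1..K. \<Sum>m=1..K. ennreal (P y m x * F y m))"
    by (intro sum.cong refl) (auto simp: ennreal_mult' P_nonneg assms)
  also have "\<dots> = (\<Sum>y=1..K. ennreal (\<Sum>m=1..K. P y m x * F y m))"
    by (intro sum.cong refl sum_ennreal) (auto intro!: mult_nonneg_nonneg P_nonneg assms)
  also have "\<dots> = ennreal (\<Sum>y=1..K. \<Sum>m=1..K. P y m x * F y m)"
    by (intro sum_ennreal) (auto intro!: sum_nonneg mult_nonneg_nonneg P_nonneg assms)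
  finally show ?thesis .
qed

lemma case3: "(\<lambda>(x, y, m). F x y m) = (\<lambda>z. F (fst z) (fst (snd z)) (snd (snd z)))"
  by (auto simp: case_prod_beta)

lemma risk_L_eq:
  assumes Gm[measurable]: "\<And>j. (\<lambda>x. G x j) \<in> borel_measurable Xs"
  shows "risk_L D K G = (\<integral>\<^sup>+ x. ennreal (CL K (PP x) (G x)) \<partial>mu)"
proof -
  have "risk_L D K G = (\<integral>\<^sup>+ z. ennreal (L_psi K (G (fst z)) (fst (snd z)) (snd (snd z))) \<partial>D)"
    unfolding risk_L_def case3[of "\<lambda>x y m. ennreal (L_psi K (G x) y m)"] ..
  also have "\<dots> = (\<integral>\<^sup>+ x. (\<Sum>y=1..K. \<Sum>m=1..K. ennreal (P y m x) * ennreal (L_psi K (G x) y m)) \<partial>mu)"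
    by (rule disintP[of "\<lambda>x y m. ennreal (L_psi K (G x) y m)"]) (unfold L_psi_def psi_t_def, measurable)
  also have "\<dots> = (\<integral>\<^sup>+ x. ennreal (CL K (PP x) (G x)) \<partial>mu)"
    unfolding CL_def PP_def
    by (intro nn_integral_cong sum_enn) (auto intro!: L_psi_nonneg K)
  finally show ?thesis .
qed

lemma integrable_bdd:
  assumes "f \<in> borel_measurable Xs" "\<And>x. x \<in> space Xs \<Longrightarrow> \<bar>f x\<bar> \<le> B"
  shows "integrable mu (f :: 'a \<Rightarrow> real)"
  using assms by (intro finite_measure.integrable_const_bound[where B=B] prob_space.finite_measure[OF prob_mu])
     (auto simp: meas_mu intro!: AE_I2)

lemma risk01_eq:
  assumes hm[measurable]: "h \<in> Xs \<rightarrow>\<^sub>M count_space UNIV"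
  shows "risk01 D h = (\<integral> x. C01 K (PP x) (h x) \<partial>mu)"
proof -
  define F where "F = (\<lambda>z :: 'a \<times> nat \<times> nat. if h (fst z) \<noteq> fst (snd z) then 1 else 0 :: real)"
  have Fm: "F \<in> borel_measurable D"
    using meas_D[of "\<lambda>x y m. if h x \<noteq> y then 1 else 0 :: real" borel] unfolding F_def by simp
  define S where "S = F -` {1} \<inter> space D"
  have S: "S \<in> sets D" unfolding S_def using Fm by (rule measurable_sets) simp
  have Seq: "{(x, y, m) \<in> space D. h x \<noteq> y} = S" unfolding S_def F_def by auto
  have "risk01 D h = measure D S" unfolding risk01_def Seq ..
  also have "\<dots> = (\<integral> z. indicator S z \<partial>D)"
    using S prob_space.emeasure_space_1[OF PD] finite_measure.emeasure_finite[OF prob_space.finite_measure[OF PD]]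
    by (subst Bochner_Integration.integral_indicator) auto
  also have "\<dots> = (\<integral> z. F z \<partial>D)"
    by (intro Bochner_Integration.integral_cong) (auto simp: S_def F_def indicator_def)
  also have "\<dots> = (\<integral> x. (\<Sum>y=1..K. \<Sum>m=1..K. P y m x * (if h x \<noteq> y then 1 else 0)) \<partial>mu)"
    unfolding F_def using RD[of "\<lambda>x y m. if h x \<noteq> y then 1 else 0"] by simp
  also have "\<dots> = (\<integral> x. C01 K (PP x) (h x) \<partial>mu)" unfolding C01_def PP_def ..
  finally show ?thesis .
qed

lemma risk_defer_eq:
  assumes fm[measurable]: "f \<in> Xs \<rightarrow>\<^sub>M count_space UNIV"
  shows "risk_defer D f = (\<integral> x. Cdef K (PP x) (f x) \<partial>mu)"
proof -
  have lm: "(\<lambda>x. loss01_defer (f x) y m) \<in> borel_measurable Xs" for y m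
    using measurable_compose[OF fm borel_measurable_count_space] .
  have "risk_defer D f = (\<integral> z. loss01_defer (f (fst z)) (fst (snd z)) (snd (snd z)) \<partial>D)"
    unfolding risk_defer_def case3[of "\<lambda>x y m. loss01_defer (f x) y m"] ..
  also have "\<dots> = (\<integral> x. (\<Sum>y=1..K. \<Sum>m=1..K. P y m x * loss01_defer (f x) y m) \<partial>mu)"
    by (rule RD) (auto simp: lm loss01_defer_def split: option.splits)
  also have "\<dots> = (\<integral> x. Cdef K (PP x) (f x) \<partial>mu)" unfolding Cdef_def PP_def ..
  finally show ?thesis .
qed

lemma Meta_meas[measurable]: "(\<lambda>x. Meta K (PP x)) \<in> borel_measurable Xs"
  unfolding Meta_def eta_def PP_def by measurable

lemma rr_meas[measurable]: "(\<lambda>x. rr K (PP x)) \<in> borel_measurable Xs"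
  unfolding rr_def PP_def by measurable

lemma Hent_meas[measurable]: "(\<lambda>x. Hent K (PP x)) \<in> borel_measurable Xs"
  unfolding Hent_def rr_def eta_def PP_def by measurable

lemma K1: "K \<ge> 1" using K by simp

lemma star01_ge: "(\<integral> x. 1 - Meta K (PP x) \<partial>mu) \<le> risk01_star Xs D K"
  unfolding risk01_star_def
proof (rule cINF_greatest)
  have "(\<lambda>_. 1) \<in> Xs \<rightarrow>\<^sub>M count_space {1..K}" using K1 by (intro measurable_const) auto
  thus "Xs \<rightarrow>\<^sub>M count_space {1..K} \<noteq> {}" by blast
  fix h assume h: "h \<in> Xs \<rightarrow>\<^sub>M count_space {1..K}"
  have hU[measurable]: "h \<in> Xs \<rightarrow>\<^sub>M count_space UNIV"
    using measurable_compose[OF h measurable_count_space[of "\<lambda>x. x" "{1..K}"]] by simp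
  have hx: "h x \<in> {1..K}" if "x \<in> space Xs" for x
    using measurable_space[OF h that] unfolding space_count_space .
  have "(\<integral> x. 1 - Meta K (PP x) \<partial>mu) \<le> (\<integral> x. C01 K (PP x) (h x) \<partial>mu)"
  proof (rule integral_mono)
    show "integrable mu (\<lambda>x. 1 - Meta K (PP x))"
    proof (rule integrable_bdd[where B=1])
      show "(\<lambda>x. 1 - Meta K (PP x)) \<in> borel_measurable Xs" by measurable
      fix x show "\<bar>1 - Meta K (PP x)\<bar> \<le> 1" using Meta_bounds[OF P_dist K1, of x] by linarith
    qed
    show "integrable mu (\<lambda>x. C01 K (PP x) (h x))"
    proof (rule integrable_bdd[where B=1])
      show "(\<lambda>x. C01 K (PP x) (h x)) \<in> borel_measurable Xs" unfolding C01_def PP_def by measurable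
      fix x assume "x \<in> space Xs"
      thus "\<bar>C01 K (PP x) (h x)\<bar> \<le> 1"
        using C01_eq[OF P_dist hx] eta_nonneg[OF hx P_dist] eta_le1[OF P_dist hx] by auto
    qed
    fix x assume "x \<in> space mu"
    hence x: "x \<in> space Xs" by simp
    show "1 - Meta K (PP x) \<le> C01 K (PP x) (h x)"
      using C01_eq[OF P_dist hx[OF x]] Meta_prop(2)[OF K1 hx[OF x]] by simp
  qed
  thus "(\<integral> x. 1 - Meta K (PP x) \<partial>mu) \<le> risk01 D h" using risk01_eq[OF hU] by simp
qed

lemma stardef_ge: "(\<integral> x. min (1 - rr K (PP x)) (1 - Meta K (PP x)) \<partial>mu) \<le> risk_defer_star Xs D K"
  unfolding risk_defer_star_def
proof (rule cINF_greatest)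
  have "(\<lambda>_. None) \<in> Xs \<rightarrow>\<^sub>M count_space (insert None (Some ` {1..K}))" by (intro measurable_const) auto
  thus "Xs \<rightarrow>\<^sub>M count_space (insert None (Some ` {1..K})) \<noteq> {}" by blast
  fix h assume h: "h \<in> Xs \<rightarrow>\<^sub>M count_space (insert None (Some ` {1..K}))"
  have hU[measurable]: "h \<in> Xs \<rightarrow>\<^sub>M count_space UNIV"
    using measurable_compose[OF h measurable_count_space[of "\<lambda>x. x" "insert None (Some ` {1..K})"]] by simp
  have hx: "h x \<in> insert None (Some ` {1..K})" if "x \<in> space Xs" for x
    using measurable_space[OF h that] unfolding space_count_space .
  have Cd: "min (1 - rr K (PP x)) (1 - Meta K (PP x)) \<le> Cdef K (PP x) (h x) \<and> \<bar>Cdef K (PP x) (h x)\<bar> \<le> 1"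
    if x: "x \<in> space Xs" for x
  proof (cases "h x")
    case None
    thus ?thesis using Cdef_None[OF P_dist] rr_bounds[OF P_dist, of x] by auto
  next
    case (Some c)
    hence c: "c \<in> {1..K}" using hx[OF x] by auto
    have "eta K (PP x) c \<le> Meta K (PP x)" using Meta_prop(2)[where P="PP x", OF K1 c] .
    thus ?thesis using Some Cdef_Some[OF P_dist c] eta_nonneg[OF c P_dist, of x] eta_le1[OF P_dist c, of x]
      by auto
  qed
  have "(\<integral> x. min (1 - rr K (PP x)) (1 - Meta K (PP x)) \<partial>mu) \<le> (\<integral> x. Cdef K (PP x) (h x) \<partial>mu)"
  proof (rule integral_mono)
    show "integrable mu (\<lambda>x. min (1 - rr K (PP x)) (1 - Meta K (PP x)))"
    proof (rule integrable_bdd[where B=1])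
      show "(\<lambda>x. min (1 - rr K (PP x)) (1 - Meta K (PP x))) \<in> borel_measurable Xs" by measurable
      fix x show "\<bar>min (1 - rr K (PP x)) (1 - Meta K (PP x))\<bar> \<le> 1"
        using Meta_bounds[OF P_dist K1, of x] rr_bounds[OF P_dist, of x] by linarith
    qed
    show "integrable mu (\<lambda>x. Cdef K (PP x) (h x))"
    proof (rule integrable_bdd[where B=1])
      show "(\<lambda>x. Cdef K (PP x) (h x)) \<in> borel_measurable Xs"
      proof -
        have lm: "(\<lambda>x. loss01_defer (h x) y m) \<in> borel_measurable Xs" for y m
          using measurable_compose[OF hU borel_measurable_count_space] .
        show ?thesis unfolding Cdef_def PP_def by (intro borel_measurable_sum borel_measurable_times P_meas lm)
      qed
      fix x assume "x \<in> space Xs" thus "\<bar>Cdef K (PP x) (h x)\<bar> \<le> 1" using Cd by blast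
    qed
    fix x assume "x \<in> space mu"
    thus "min (1 - rr K (PP x)) (1 - Meta K (PP x)) \<le> Cdef K (PP x) (h x)" using Cd by simp
  qed
  thus "(\<integral> x. min (1 - rr K (PP x)) (1 - Meta K (PP x)) \<partial>mu) \<le> risk_defer D h"
    using risk_defer_eq[OF hU] by simp
qed

lemma Hent_int: "integrable mu (\<lambda>x. Hent K (PP x))"
proof (rule integrable_bdd[where B="real K + 2"])
  show "(\<lambda>x. Hent K (PP x)) \<in> borel_measurable Xs" by measurable
  fix x show "\<bar>Hent K (PP x)\<bar> \<le> real K + 2" using Hent_bounds[OF P_dist, of x] by linarith
qed

lemma Lstar_le: "risk_L_star Xs D K \<le> ennreal (\<integral> x. Hent K (PP x) \<partial>mu)"
proof (rule ennreal_le_epsilon)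
  fix e :: real assume e: "0 < e"
  define e' where "e' = e / (real K + 2)"
  have e': "e' > 0" unfolding e'_def using e by simp
  define ge where "ge x j = ustar K e' (PP x) j" for x j
  have gem[measurable]: "(\<lambda>x. ge x j) \<in> borel_measurable Xs" for j
    unfolding ge_def ustar_def eta_def rr_def PP_def by measurable
  have gs: "ge \<in> meas_scores Xs K" unfolding meas_scores_def by simp
  have "risk_L_star Xs D K \<le> risk_L D K ge" unfolding risk_L_star_def using gs by (rule INF_lower)
  also have "\<dots> = (\<integral>\<^sup>+ x. ennreal (CL K (PP x) (ge x)) \<partial>mu)" by (rule risk_L_eq[OF gem])
  also have "\<dots> \<le> (\<integral>\<^sup>+ x. ennreal (Hent K (PP x) + (real K + 2) * e') \<partial>mu)"
    unfolding ge_def using ustar_good[OF P_dist K e'] by (intro nn_integral_mono ennreal_leI) auto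
  also have "\<dots> = ennreal (\<integral> x. Hent K (PP x) + (real K + 2) * e' \<partial>mu)"
  proof (rule nn_integral_eq_integral)
    show "integrable mu (\<lambda>x. Hent K (PP x) + (real K + 2) * e')"
    proof (rule integrable_bdd[where B="real K + 2 + (real K + 2) * e'"])
      show "(\<lambda>x. Hent K (PP x) + (real K + 2) * e') \<in> borel_measurable Xs" by measurable
      fix x show "\<bar>Hent K (PP x) + (real K + 2) * e'\<bar> \<le> real K + 2 + (real K + 2) * e'"
        using Hent_bounds[OF P_dist, of x] e' by simp
    qed
    show "AE x in mu. 0 \<le> Hent K (PP x) + (real K + 2) * e'"
      using Hent_bounds[OF P_dist] e' by (intro AE_I2) (simp add: add_nonneg_nonneg)
  qed
  also have "(\<integral> x. Hent K (PP x) + (real K + 2) * e' \<partial>mu) = (\<integral> x. Hent K (PP x) \<partial>mu) + e"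
  proof -
    have ci: "integrable mu (\<lambda>x. (real K + 2) * e')"
      by (rule integrable_bdd[where B="(real K + 2) * e'"]) (use e' in auto)
    have "(\<integral> x. Hent K (PP x) + (real K + 2) * e' \<partial>mu) = (\<integral> x. Hent K (PP x) \<partial>mu) + (\<integral> x. (real K + 2) * e' \<partial>mu)"
      by (rule Bochner_Integration.integral_add[OF Hent_int ci])
    also have "(\<integral> x. (real K + 2) * e' \<partial>mu) = e"
      using prob_space.prob_space[OF prob_mu] unfolding e'_def by simp
    finally show ?thesis .
  qed
  also have "ennreal ((\<integral> x. Hent K (PP x) \<partial>mu) + e) = ennreal (\<integral> x. Hent K (PP x) \<partial>mu) + ennreal e"
    using e Hent_bounds[OF P_dist] by (intro ennreal_plus integral_nonneg_AE AE_I2) auto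
  finally show "risk_L_star Xs D K \<le> ennreal (\<integral> x. Hent K (PP x) \<partial>mu) + ennreal e" .
qed

lemma KLs_nonneg: "isdist K Q \<Longrightarrow> 0 \<le> CL K Q u - Hent K Q"
proof -
  assume Q: "isdist K Q"
  have a: "1 \<in> {1..K}" using K by simp
  have "0 \<le> KL1 K Q u" using KL1_ge[OF Q K a, of u]
    by (meson order_trans zero_le_power2 mult_nonneg_nonneg zero_le_numeral)
  moreover have "0 \<le> bkl (rr K Q) (psi_t K u (K+1))" using KL2_ge[OF Q K, of u]
    by (meson order_trans zero_le_power2 mult_nonneg_nonneg zero_le_numeral)
  ultimately show ?thesis using KL_decomp[OF Q, of u] by simp
qed

lemma sqrt_am: "0 \<le> (z::real) \<Longrightarrow> 0 < c \<Longrightarrow> sqrt (2 * z) \<le> z / c + c / 2"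
proof -
  assume z: "0 \<le> z" and c: "0 < c"
  define s where "s = sqrt (2 * z)"
  have s2: "s^2 = 2 * z" unfolding s_def using z by simp
  have "0 \<le> (s - c)^2" by simp
  hence "2 * c * s \<le> 2 * z + c^2" using s2 by (simp add: power2_eq_square algebra_simps)
  hence "s \<le> (2 * z + c^2) / (2 * c)" using c by (simp add: field_simps)
  also have "\<dots> = z / c + c / 2" using c by (simp add: field_simps power2_eq_square)
  finally show ?thesis unfolding s_def .
qed

lemma jensen_sqrt:
  assumes ZI: "integrable mu Z" and Z0: "\<And>x. 0 \<le> Z x"
    and SI: "integrable mu (\<lambda>x. sqrt (2 * Z x))"
  shows "(\<integral> x. sqrt (2 * Z x) \<partial>mu) \<le> sqrt (2 * (\<integral> x. Z x \<partial>mu))"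
proof -
  define I where "I = (\<integral> x. Z x \<partial>mu)"
  have I0: "0 \<le> I" unfolding I_def using Z0 by (intro integral_nonneg_AE AE_I2) auto
  have key: "(\<integral> x. sqrt (2 * Z x) \<partial>mu) \<le> I / c + c / 2" if c: "0 < c" for c
  proof -
    have ci: "integrable mu (\<lambda>x. c / 2)" by (rule integrable_bdd[where B="c/2"]) (use c in auto)
    have "(\<integral> x. sqrt (2 * Z x) \<partial>mu) \<le> (\<integral> x. Z x / c + c / 2 \<partial>mu)"
      using sqrt_am[OF Z0 c] SI ZI ci by (intro integral_mono) auto
    also have "\<dots> = (\<integral> x. Z x / c \<partial>mu) + (\<integral> x. c / 2 \<partial>mu)"
      using ZI ci by (intro Bochner_Integration.integral_add) auto
    also have "\<dots> = I / c + c / 2"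
      using prob_space.prob_space[OF prob_mu] unfolding I_def by simp
    finally show ?thesis .
  qed
  show ?thesis
  proof (cases "I = 0")
    case True
    show ?thesis
    proof (rule ccontr)
      assume "\<not> ?thesis"
      hence pos: "(\<integral> x. sqrt (2 * Z x) \<partial>mu) > 0" using True unfolding I_def by simp
      have "(\<integral> x. sqrt (2 * Z x) \<partial>mu) \<le> I / (\<integral> x. sqrt (2 * Z x) \<partial>mu) + (\<integral> x. sqrt (2 * Z x) \<partial>mu) / 2"
        by (rule key[OF pos])
      thus False using True pos by simp
    qed
  next
    case False
    hence Ip: "I > 0" using I0 by simp
    define c where "c = sqrt (2 * I)"
    have c: "c > 0" unfolding c_def using Ip by simp
    have c2: "c * c = 2 * I" unfolding c_def using Ip by simp
    have "I / c + c / 2 = c" using c c2 by (simp add: field_simps)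
    thus ?thesis using key[OF c] unfolding c_def I_def by simp
  qed
qed

lemma main:
  assumes g: "g \<in> meas_scores Xs K" and fin: "risk_L D K g \<noteq> \<infinity>"
  shows "max (risk01 D (\<lambda>x. argmaxK K (g x)) - risk01_star Xs D K)
             (risk_defer D (\<lambda>x. phi K (g x)) - risk_defer_star Xs D K)
           \<le> sqrt (2 * (enn2real (risk_L D K g) - enn2real (risk_L_star Xs D K)))"
proof -
  define G where "G x = restrK K (g x)" for x
  have Gm[measurable]: "(\<lambda>x. G x j) \<in> borel_measurable Xs" for j
    using g unfolding G_def restrK_def meas_scores_def by (cases "j \<in> {1..K+1}") auto
  define C where "C x = CL K (PP x) (g x)" for x
  define H where "H x = Hent K (PP x)" for x
  have CG: "C = (\<lambda>x. CL K (PP x) (G x))" unfolding C_def G_def by (simp add: CL_restrK)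
  have Cm: "C \<in> borel_measurable Xs" unfolding CG CL_def L_psi_def psi_t_def PP_def by measurable
  have RL: "risk_L D K g = (\<integral>\<^sup>+ x. ennreal (C x) \<partial>mu)"
  proof -
    have "risk_L D K g = risk_L D K G"
      unfolding risk_L_def case3[of "\<lambda>x y m. ennreal (L_psi K (g x) y m)"] case3[of "\<lambda>x y m. ennreal (L_psi K (G x) y m)"]
      by (intro nn_integral_cong) (auto simp: spD G_def L_psi_restrK)
    also have "\<dots> = (\<integral>\<^sup>+ x. ennreal (CL K (PP x) (G x)) \<partial>mu)" by (rule risk_L_eq[OF Gm])
    finally show ?thesis unfolding CG .
  qed
  have C0: "0 \<le> C x" for x
    unfolding C_def CL_def PP_def
    by (intro sum_nonneg mult_nonneg_nonneg P_nonneg L_psi_nonneg K) auto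
  have Cmu: "C \<in> borel_measurable mu" using Cm by (simp add: meas_mu)
  have CI: "integrable mu C"
    using fin RL C0 by (intro integrableI_nonneg[OF Cmu]) (auto simp: less_top)
  have RLr: "enn2real (risk_L D K g) = (\<integral> x. C x \<partial>mu)"
    unfolding RL using integral_eq_nn_integral[OF Cmu] C0 by simp
  have H0: "0 \<le> (\<integral> x. H x \<partial>mu)" unfolding H_def
    using Hent_bounds[OF P_dist] by (intro integral_nonneg_AE AE_I2) auto
  have Lst: "enn2real (risk_L_star Xs D K) \<le> (\<integral> x. H x \<partial>mu)"
    using enn2real_mono[OF Lstar_le] H0 unfolding H_def by simp
  define Z where "Z x = C x - H x" for x
  have Z0: "0 \<le> Z x" for x unfolding Z_def C_def H_def using KLs_nonneg[OF P_dist] .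
  have HI: "integrable mu H" unfolding H_def by (rule Hent_int)
  have ZI: "integrable mu Z" unfolding Z_def using CI HI by (rule Bochner_Integration.integrable_diff)
  have IZ: "(\<integral> x. Z x \<partial>mu) = (\<integral> x. C x \<partial>mu) - (\<integral> x. H x \<partial>mu)"
    unfolding Z_def using CI HI by (rule Bochner_Integration.integral_diff)
  have Zm: "Z \<in> borel_measurable Xs" unfolding Z_def H_def using Cm by measurable
  have SZI: "integrable mu (\<lambda>x. sqrt (2 * Z x))"
  proof (rule Bochner_Integration.integrable_bound)
    show "integrable mu (\<lambda>x. 1 + Z x)"
      using ZI by (intro Bochner_Integration.integrable_add) (auto intro: integrable_bdd[where B=1])
    show "(\<lambda>x. sqrt (2 * Z x)) \<in> borel_measurable mu" using Zm by (simp add: meas_mu)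
    show "AE x in mu. norm (sqrt (2 * Z x)) \<le> norm (1 + Z x)"
    proof (rule AE_I2)
      fix x have "sqrt (2 * Z x) \<le> Z x / 1 + 1 / 2" by (rule sqrt_am[OF Z0]) simp
      thus "norm (sqrt (2 * Z x)) \<le> norm (1 + Z x)" using Z0[of x] by simp
    qed
  qed
  have J: "(\<integral> x. sqrt (2 * Z x) \<partial>mu) \<le> sqrt (2 * (enn2real (risk_L D K g) - enn2real (risk_L_star Xs D K)))"
  proof -
    have "(\<integral> x. sqrt (2 * Z x) \<partial>mu) \<le> sqrt (2 * (\<integral> x. Z x \<partial>mu))"
      by (rule jensen_sqrt[OF ZI Z0 SZI])
    also have "\<dots> \<le> sqrt (2 * (enn2real (risk_L D K g) - enn2real (risk_L_star Xs D K)))"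
      using IZ RLr Lst by simp
    finally show ?thesis .
  qed
  have Meta_int: "integrable mu (\<lambda>x. 1 - Meta K (PP x))"
  proof (rule integrable_bdd[where B=1])
    show "(\<lambda>x. 1 - Meta K (PP x)) \<in> borel_measurable Xs" by measurable
    fix x show "\<bar>1 - Meta K (PP x)\<bar> \<le> 1" using Meta_bounds[OF P_dist K1, of x] by linarith
  qed
  have min_int: "integrable mu (\<lambda>x. min (1 - rr K (PP x)) (1 - Meta K (PP x)))"
  proof (rule integrable_bdd[where B=1])
    show "(\<lambda>x. min (1 - rr K (PP x)) (1 - Meta K (PP x))) \<in> borel_measurable Xs" by measurable
    fix x show "\<bar>min (1 - rr K (PP x)) (1 - Meta K (PP x))\<bar> \<le> 1"
      using Meta_bounds[OF P_dist K1, of x] rr_bounds[OF P_dist, of x] by linarith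
  qed
  have A1: "risk01 D (\<lambda>x. argmaxK K (g x)) - risk01_star Xs D K \<le> sqrt (2 * (enn2real (risk_L D K g) - enn2real (risk_L_star Xs D K)))"
  proof -
    have hG: "(\<lambda>x. argmaxK K (g x)) = (\<lambda>x. argmaxK K (G x))" unfolding G_def by (simp add: argmaxK_restrK)
    have hm: "(\<lambda>x. argmaxK K (g x)) \<in> Xs \<rightarrow>\<^sub>M count_space UNIV" unfolding hG by (rule argmax_meas[OF Gm])
    have hx: "argmaxK K (g x) \<in> {1..K}" for x using argmaxK_prop[OF K1] by blast
    have CI1: "integrable mu (\<lambda>x. C01 K (PP x) (argmaxK K (g x)))"
    proof (rule integrable_bdd[where B=1])
      show "(\<lambda>x. C01 K (PP x) (argmaxK K (g x))) \<in> borel_measurable Xs" unfolding C01_def PP_def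
        using hm by measurable
      fix x show "\<bar>C01 K (PP x) (argmaxK K (g x))\<bar> \<le> 1"
        using C01_eq[OF P_dist hx] eta_nonneg[OF hx P_dist, of x] eta_le1[OF P_dist hx, of x] by simp
    qed
    have "risk01 D (\<lambda>x. argmaxK K (g x)) - risk01_star Xs D K \<le>
        (\<integral> x. C01 K (PP x) (argmaxK K (g x)) \<partial>mu) - (\<integral> x. 1 - Meta K (PP x) \<partial>mu)"
      using risk01_eq[OF hm] star01_ge by linarith
    also have "\<dots> = (\<integral> x. C01 K (PP x) (argmaxK K (g x)) - (1 - Meta K (PP x)) \<partial>mu)"
      by (rule Bochner_Integration.integral_diff[symmetric, OF CI1 Meta_int])
    also have "\<dots> \<le> (\<integral> x. sqrt (2 * Z x) \<partial>mu)"
    proof (rule integral_mono)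
      show "integrable mu (\<lambda>x. C01 K (PP x) (argmaxK K (g x)) - (1 - Meta K (PP x)))"
        using CI1 Meta_int by (rule Bochner_Integration.integrable_diff)
      show "integrable mu (\<lambda>x. sqrt (2 * Z x))" by (rule SZI)
      fix x show "C01 K (PP x) (argmaxK K (g x)) - (1 - Meta K (PP x)) \<le> sqrt (2 * Z x)"
        unfolding Z_def C_def H_def by (rule excess_class[OF P_dist K])
    qed
    finally show ?thesis using J by linarith
  qed
  have A2: "risk_defer D (\<lambda>x. phi K (g x)) - risk_defer_star Xs D K \<le> sqrt (2 * (enn2real (risk_L D K g) - enn2real (risk_L_star Xs D K)))"
  proof -
    have fG: "(\<lambda>x. phi K (g x)) = (\<lambda>x. phi K (G x))" unfolding G_def by (simp add: phi_restrK)
    have fm: "(\<lambda>x. phi K (g x)) \<in> Xs \<rightarrow>\<^sub>M count_space UNIV" unfolding fG by (rule phi_meas[OF Gm])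
    have fx: "\<bar>Cdef K (PP x) (phi K (g x))\<bar> \<le> 1" for x
    proof (cases "phi K (g x)")
      case None thus ?thesis using Cdef_None[OF P_dist] rr_bounds[OF P_dist, of x] by simp
    next
      case (Some c)
      hence "c = argmaxK K (g x)" unfolding phi_def by (auto split: if_splits)
      hence c: "c \<in> {1..K}" using argmaxK_prop[OF K1] by blast
      thus ?thesis using Some Cdef_Some[OF P_dist c] eta_nonneg[OF c P_dist, of x] eta_le1[OF P_dist c, of x] by simp
    qed
    have CI2: "integrable mu (\<lambda>x. Cdef K (PP x) (phi K (g x)))"
    proof (rule integrable_bdd[where B=1])
      have lm: "(\<lambda>x. loss01_defer (phi K (g x)) y m) \<in> borel_measurable Xs" for y m
      proof -
        have "(\<lambda>x. (\<lambda>ov. loss01_defer ov y m) (phi K (g x))) \<in> borel_measurable Xs"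
          by (rule measurable_compose[OF fm borel_measurable_count_space])
        thus ?thesis by simp
      qed
      show "(\<lambda>x. Cdef K (PP x) (phi K (g x))) \<in> borel_measurable Xs"
        unfolding Cdef_def PP_def by (intro borel_measurable_sum borel_measurable_times P_meas lm)
      fix x show "\<bar>Cdef K (PP x) (phi K (g x))\<bar> \<le> 1" by (rule fx)
    qed
    have "risk_defer D (\<lambda>x. phi K (g x)) - risk_defer_star Xs D K \<le>
        (\<integral> x. Cdef K (PP x) (phi K (g x)) \<partial>mu) - (\<integral> x. min (1 - rr K (PP x)) (1 - Meta K (PP x)) \<partial>mu)"
      using risk_defer_eq[OF fm] stardef_ge by linarith
    also have "\<dots> = (\<integral> x. Cdef K (PP x) (phi K (g x)) - min (1 - rr K (PP x)) (1 - Meta K (PP x)) \<partial>mu)"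
      by (rule Bochner_Integration.integral_diff[symmetric, OF CI2 min_int])
    also have "\<dots> \<le> (\<integral> x. sqrt (2 * Z x) \<partial>mu)"
    proof (rule integral_mono)
      show "integrable mu (\<lambda>x. Cdef K (PP x) (phi K (g x)) - min (1 - rr K (PP x)) (1 - Meta K (PP x)))"
        using CI2 min_int by (rule Bochner_Integration.integrable_diff)
      show "integrable mu (\<lambda>x. sqrt (2 * Z x))" by (rule SZI)
      fix x show "Cdef K (PP x) (phi K (g x)) - min (1 - rr K (PP x)) (1 - Meta K (PP x)) \<le> sqrt (2 * Z x)"
        unfolding Z_def C_def H_def by (rule excess_defer[OF P_dist K])
    qed
    finally show ?thesis using J by linarith
  qed
  show ?thesis using A1 A2 by simp
qed

end


theorem theorem3:
  fixes Xs :: "'a measure" and D :: "('a \<times> nat \<times> nat) measure"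
    and K :: nat and g :: "'a \<Rightarrow> nat \<Rightarrow> real"
  assumes "K > 1"
    and "prob_space D"
    and "sets D = sets (Xs \<Otimes>\<^sub>M count_space {1..K} \<Otimes>\<^sub>M count_space {1..K})"
    and "g \<in> meas_scores Xs K"
  shows "risk_L D K g = \<infinity> \<or>
         max (risk01 D (\<lambda>x. argmaxK K (g x)) - risk01_star Xs D K)
             (risk_defer D (\<lambda>x. phi K (g x)) - risk_defer_star Xs D K)
           \<le> sqrt (2 * (enn2real (risk_L D K g) - enn2real (risk_L_star Xs D K)))"
proof -
  interpret dsetup Xs D K by (rule dsetup.intro[OF assms(1-3)])
  show ?thesis
  proof (cases "risk_L D K g = \<infinity>")
    case True thus ?thesis by simp
  next
    case False thus ?thesis using main[OF assms(4)] by simp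
  qed
qed

end
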